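(* Let $n\ge 1$, let $\eta\in\mathbb{C}$, and fix constants $\alpha,\beta,\gamma,\delta\in\mathbb{C}$ with $\alpha\neq 0$. On the space $\mathbb{C}^{4n}$ with coordinates $A_i,B_i,C_i,D_i$ ($i=1,\dots,n$), encoded in the polynomial matrix $$T(\lambda)=\begin{pmatrix}A(\lambda)&B(\lambda)\\ C(\lambda)&D(\lambda)\end{pmatrix}=\begin{pmatrix}\alpha\lambda^n+A_1\lambda^{n-1}+\dots+A_n & \beta\lambda^n+B_1\lambda^{n-1}+\dots+B_n\\ \gamma\lambda^n+C_1\lambda^{n-1}+\dots+C_n & \delta\lambda^n+D_1\lambda^{n-1}+\dots+D_n\end{pmatrix},$$ consider the Sklyanin bracket $\{\cdot,\cdot\}_0$ and the bracket $\{\cdot,\cdot\}_1$ defined in the context below. Then $\{\cdot,\cdot\}_1$ is a Poisson bracket compatible with $\{\cdot,\cdot\}_0$, i.e. every linear combination $a\{\cdot,\cdot\}_0+b\{\cdot,\cdot\}_1$ ($a,b\in\mathbb{C}$) is a Poisson bracket.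
   Context: Brackets are specified by generating functions: for polynomial entries $X(\lambda),Y(\mu)$ of $T$, an identity $\{X(\lambda),Y(\mu)\}=F(\lambda,\mu)$ (with $F$ a polynomial in $\lambda,\mu$ after cancelling the factor $\lambda-\mu$) means that the bracket of the coefficient of $\lambda^{a}$ in $X$ with the coefficient of $\mu^{b}$ in $Y$ equals the coefficient of $\lambda^a\mu^b$ in $F$; the leading coefficients $\alpha,\beta,\gamma,\delta$ are constants; the brackets are extended to all functions by skew-symmetry ($\{Y(\mu),X(\lambda)\}=-\{X(\lambda),Y(\mu)\}$) and the Leibniz rule. The Sklyanin bracket $\{\cdot,\cdot\}_0$ is: $\{A(\lambda),A(\mu)\}_0=\{B(\lambda),B(\mu)\}_0=\{C(\lambda),C(\mu)\}_0=\{D(\lambda),D(\mu)\}_0=0$, $\{B(\lambda),A(\mu)\}_0=\frac{\eta}{\lambda-\mu}(B(\lambda)A(\mu)-B(\mu)A(\lambda))$, $\{C(\lambda),A(\mu)\}_0=\frac{-\eta}{\lambda-\mu}(C(\lambda)A(\mu)-C(\mu)A(\lambda))$, $\{B(\lambda),C(\mu)\}_0=\frac{\eta}{\lambda-\mu}(D(\lambda)A(\mu)-D(\mu)A(\lambda))$, $\{B(\lambda),D(\mu)\}_0=\frac{-\eta}{\lambda-\mu}(B(\lambda)D(\mu)-B(\mu)D(\lambda))$, $\{C(\lambda),D(\mu)\}_0=\frac{\eta}{\lambda-\mu}(C(\lambda)D(\mu)-C(\mu)D(\lambda))$, $\{A(\lambda),D(\mu)\}_0=\frac{\eta}{\lambda-\mu}(C(\lambda)B(\mu)-C(\mu)B(\lambda))$.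 (Equivalently $\{T(\lambda)\otimes I, I\otimes T(\mu)\}_0=[r(\lambda-\mu),T(\lambda)\otimes T(\mu)]$ with $r(\lambda-\mu)=\frac{\eta}{\lambda-\mu}\Pi$, $\Pi$ the $4\times4$ permutation matrix of $\mathbb{C}^2\otimes\mathbb{C}^2$.) The bracket $\{\cdot,\cdot\}_1$ is: $\{A(\lambda),A(\mu)\}_1=\{B(\lambda),B(\mu)\}_1=\{C(\lambda),C(\mu)\}_1=0$, $\{B(\lambda),A(\mu)\}_1=\frac{\eta}{\lambda-\mu}(\lambda B(\lambda)A(\mu)-\mu B(\mu)A(\lambda))-\frac{\eta\beta}{\alpha}A(\lambda)A(\mu)$, $\{C(\lambda),A(\mu)\}_1=\frac{-\eta}{\lambda-\mu}(\lambda C(\lambda)A(\mu)-\mu C(\mu)A(\lambda))+\frac{\eta\gamma}{\alpha}A(\lambda)A(\mu)$, $\{B(\lambda),C(\mu)\}_1=\frac{\eta}{\lambda-\mu}(\lambda D(\lambda)A(\mu)-\mu D(\mu)A(\lambda))-\frac{\eta\delta}{\alpha}A(\lambda)A(\mu)$, $\{B(\lambda),D(\mu)\}_1=\frac{-\eta\lambda}{\lambda-\mu}(B(\lambda)D(\mu)-B(\mu)D(\lambda))+\eta A(\lambda)\left(\frac{\beta}{\alpha}D(\mu)-\frac{\delta}{\alpha}B(\mu)\right)$, $\{C(\lambda),D(\mu)\}_1=\frac{\eta\lambda}{\lambda-\mu}(C(\lambda)D(\mu)-C(\mu)D(\lambda))-\eta A(\lambda)\left(\frac{\gamma}{\alpha}D(\mu)-\frac{\delta}{\alpha}C(\mu)\right)$,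 $\{A(\lambda),D(\mu)\}_1=\frac{\eta\lambda}{\lambda-\mu}(C(\lambda)B(\mu)-C(\mu)B(\lambda))-\eta A(\lambda)\left(\frac{\gamma}{\alpha}B(\mu)-\frac{\beta}{\alpha}C(\mu)\right)$, $\{D(\lambda),D(\mu)\}_1=\frac{\eta\gamma}{\alpha}(D(\lambda)B(\mu)-D(\mu)B(\lambda))-\frac{\eta\beta}{\alpha}(D(\lambda)C(\mu)-D(\mu)C(\lambda))+\frac{\eta\delta}{\alpha}(B(\lambda)C(\mu)-B(\mu)C(\lambda))$. *)

theory Defs
  imports "HOL-Analysis.Analysis"
begin

text \<open>Coordinates of C^(4n): the entry label (A,B,C,D) and an index i in 1..n.
  Points of the space are functions from labels to complex numbers; only the
  labels with 1 <= i <= n matter.\<close>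

datatype ent = EA | EB | EC | ED

type_synonym pt = "ent \<times> nat \<Rightarrow> complex"

definition coords :: "nat \<Rightarrow> (ent \<times> nat) set" where
  "coords n = UNIV \<times> {1..n}"

inductive_set polyfun :: "nat \<Rightarrow> (pt \<Rightarrow> complex) set" for n where
  pf_const: "(\<lambda>x. c) \<in> polyfun n"
| pf_coord: "1 \<le> i \<Longrightarrow> i \<le> n \<Longrightarrow> (\<lambda>x. x (e, i)) \<in> polyfun n"
| pf_add: "f \<in> polyfun n \<Longrightarrow> g \<in> polyfun n \<Longrightarrow> (\<lambda>x. f x + g x) \<in> polyfun n"
| pf_mult: "f \<in> polyfun n \<Longrightarrow> g \<in> polyfun n \<Longrightarrow> (\<lambda>x. f x * g x) \<in> polyfun n"

definition pd :: "ent \<times> nat \<Rightarrow> (pt \<Rightarrow> complex) \<Rightarrow> pt \<Rightarrow> complex" where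
  "pd v f x = deriv (\<lambda>t. f (x(v := t))) (x v)"

text \<open>The bracket determined (via skew-symmetry and the Leibniz rule) by the
  brackets P v w of the coordinate functions: the unique biderivation extending them.\<close>

definition pbr :: "nat \<Rightarrow> (ent \<times> nat \<Rightarrow> ent \<times> nat \<Rightarrow> pt \<Rightarrow> complex)
    \<Rightarrow> (pt \<Rightarrow> complex) \<Rightarrow> (pt \<Rightarrow> complex) \<Rightarrow> pt \<Rightarrow> complex" where
  "pbr n P f g x = (\<Sum>v\<in>coords n. \<Sum>w\<in>coords n. P v w x * pd v f x * pd w g x)"

definition is_poisson :: "nat \<Rightarrow> (ent \<times> nat \<Rightarrow> ent \<times> nat \<Rightarrow> pt \<Rightarrow> complex) \<Rightarrow> bool" where
  "is_poisson n P \<longleftrightarrow>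
     (\<forall>f\<in>polyfun n. \<forall>g\<in>polyfun n.
        pbr n P f g \<in> polyfun n \<and>
        pbr n P f g = (\<lambda>x. - pbr n P g f x) \<and>
        (\<forall>h\<in>polyfun n. \<forall>x.
           pbr n P f (pbr n P g h) x + pbr n P g (pbr n P h f) x
             + pbr n P h (pbr n P f g) x = 0))"

definition entry :: "nat \<Rightarrow> complex \<Rightarrow> ent \<Rightarrow> pt \<Rightarrow> complex \<Rightarrow> complex" where
  "entry n c e x l = c * l ^ n + (\<Sum>i=1..n. x (e, i) * l ^ (n - i))"

text \<open>Generating function {X(l), Y(m)} of the coordinate brackets:
  the bracket of X_i (coefficient of l^(n-i)) with Y_j (coefficient of m^(n-j)).
  Brackets involving the constant leading coefficients are zero.\<close>

definition genbr :: "nat \<Rightarrow> (ent \<times> nat \<Rightarrow> ent \<times> nat \<Rightarrow> pt \<Rightarrow> complex)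
    \<Rightarrow> ent \<Rightarrow> ent \<Rightarrow> pt \<Rightarrow> complex \<Rightarrow> complex \<Rightarrow> complex" where
  "genbr n P X Y x l m = (\<Sum>i=1..n. \<Sum>j=1..n. P (X, i) (Y, j) x * l ^ (n - i) * m ^ (n - j))"

definition skew_on :: "nat \<Rightarrow> (ent \<times> nat \<Rightarrow> ent \<times> nat \<Rightarrow> pt \<Rightarrow> complex) \<Rightarrow> bool" where
  "skew_on n P \<longleftrightarrow> (\<forall>v\<in>coords n. \<forall>w\<in>coords n. \<forall>x. P w v x = - P v w x)"

definition sklyanin0 :: "nat \<Rightarrow> complex \<Rightarrow> complex \<Rightarrow> complex \<Rightarrow> complex \<Rightarrow> complex
    \<Rightarrow> (ent \<times> nat \<Rightarrow> ent \<times> nat \<Rightarrow> pt \<Rightarrow> complex) \<Rightarrow> bool" where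
  "sklyanin0 n \<eta> \<alpha> \<beta> \<gamma> \<delta> P \<longleftrightarrow> skew_on n P \<and>
    (\<forall>x l m. l \<noteq> m \<longrightarrow>
      (let A = entry n \<alpha> EA x; B = entry n \<beta> EB x; C = entry n \<gamma> EC x; D = entry n \<delta> ED x;
           G = genbr n P
       in G EA EA x l m = 0 \<and> G EB EB x l m = 0 \<and> G EC EC x l m = 0 \<and> G ED ED x l m = 0 \<and>
          G EB EA x l m = \<eta> / (l - m) * (B l * A m - B m * A l) \<and>
          G EC EA x l m = - \<eta> / (l - m) * (C l * A m - C m * A l) \<and>
          G EB EC x l m = \<eta> / (l - m) * (D l * A m - D m * A l) \<and>
          G EB ED x l m = - \<eta> / (l - m) * (B l * D m - B m * D l) \<and>
          G EC ED x l m = \<eta> / (l - m) * (C l * D m - C m * D l) \<and>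
          G EA ED x l m = \<eta> / (l - m) * (C l * B m - C m * B l)))"

definition bracket1 :: "nat \<Rightarrow> complex \<Rightarrow> complex \<Rightarrow> complex \<Rightarrow> complex \<Rightarrow> complex
    \<Rightarrow> (ent \<times> nat \<Rightarrow> ent \<times> nat \<Rightarrow> pt \<Rightarrow> complex) \<Rightarrow> bool" where
  "bracket1 n \<eta> \<alpha> \<beta> \<gamma> \<delta> P \<longleftrightarrow> skew_on n P \<and>
    (\<forall>x l m. l \<noteq> m \<longrightarrow>
      (let A = entry n \<alpha> EA x; B = entry n \<beta> EB x; C = entry n \<gamma> EC x; D = entry n \<delta> ED x;
           G = genbr n P
       in G EA EA x l m = 0 \<and> G EB EB x l m = 0 \<and> G EC EC x l m = 0 \<and>
          G EB EA x l m = \<eta> / (l - m) * (l * B l * A m - m * B m * A l)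
                          - \<eta> * \<beta> / \<alpha> * A l * A m \<and>
          G EC EA x l m = - \<eta> / (l - m) * (l * C l * A m - m * C m * A l)
                          + \<eta> * \<gamma> / \<alpha> * A l * A m \<and>
          G EB EC x l m = \<eta> / (l - m) * (l * D l * A m - m * D m * A l)
                          - \<eta> * \<delta> / \<alpha> * A l * A m \<and>
          G EB ED x l m = - \<eta> * l / (l - m) * (B l * D m - B m * D l)
                          + \<eta> * A l * (\<beta> / \<alpha> * D m - \<delta> / \<alpha> * B m) \<and>
          G EC ED x l m = \<eta> * l / (l - m) * (C l * D m - C m * D l)
                          - \<eta> * A l * (\<gamma> / \<alpha> * D m - \<delta> / \<alpha> * C m) \<and>
          G EA ED x l m = \<eta> * l / (l - m) * (C l * B m - C m * B l)
                          - \<eta> * A l * (\<gamma> / \<alpha> * B m - \<beta> / \<alpha> * C m) \<and>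
          G ED ED x l m = \<eta> * \<gamma> / \<alpha> * (D l * B m - D m * B l)
                          - \<eta> * \<beta> / \<alpha> * (D l * C m - D m * C l)
                          + \<eta> * \<delta> / \<alpha> * (B l * C m - B m * C l)))"

end

theory Submission
  imports Defs
begin

lemma pf_coord': "v \<in> coords n \<Longrightarrow> (\<lambda>x. x v) \<in> polyfun n"
  by (cases v) (auto simp: coords_def intro: polyfun.pf_coord)

lemma pf_sum: "finite S \<Longrightarrow> (\<And>s. s \<in> S \<Longrightarrow> f s \<in> polyfun n) \<Longrightarrow> (\<lambda>x. \<Sum>s\<in>S. f s x) \<in> polyfun n"
proof (induction S rule: finite_induct)
  case empty then show ?case using polyfun.pf_const[of 0] by simp
next
  case (insert a S)
  then show ?case using polyfun.pf_add[of "f a" n "\<lambda>x. \<Sum>s\<in>S. f s x"] by simp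
qed

lemma pf_scal: "f \<in> polyfun n \<Longrightarrow> (\<lambda>x. c * f x) \<in> polyfun n"
  using polyfun.pf_mult[OF polyfun.pf_const] by blast

lemma pf_neg: "f \<in> polyfun n \<Longrightarrow> (\<lambda>x. - f x) \<in> polyfun n"
  using pf_scal[of f n "-1"] by simp

lemma pf_diff: "f \<in> polyfun n \<Longrightarrow> g \<in> polyfun n \<Longrightarrow> (\<lambda>x. f x - g x) \<in> polyfun n"
  using polyfun.pf_add[OF _ pf_neg] by fastforce

lemmas pf_intros = polyfun.pf_const polyfun.pf_add polyfun.pf_mult pf_sum pf_scal pf_neg pf_diff

lemma pf_deriv_ex:
  assumes "f \<in> polyfun n"
  shows "\<exists>f'\<in>polyfun n. \<forall>x t. ((\<lambda>s. f (x(v:=s))) has_field_derivative f' (x(v:=t))) (at t)"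
  using assms
proof (induction rule: polyfun.induct)
  case (pf_const c)
  show ?case by (rule bexI[of _ "\<lambda>x. 0"]) (auto intro: polyfun.pf_const)
next
  case (pf_coord i e)
  show ?case
  proof (rule bexI[of _ "\<lambda>x. if v = (e,i) then 1 else 0"])
    show "\<forall>x t. ((\<lambda>s. (x(v := s)) (e, i)) has_field_derivative (if v = (e, i) then 1 else 0)) (at t)"
      by (cases "v = (e,i)") auto
  qed (auto intro: polyfun.pf_const)
next
  case (pf_add f g)
  then obtain f' g' where fg: "f' \<in> polyfun n" "g' \<in> polyfun n"
    and df: "\<And>x t. ((\<lambda>s. f (x(v:=s))) has_field_derivative f' (x(v:=t))) (at t)"
    and dg: "\<And>x t. ((\<lambda>s. g (x(v:=s))) has_field_derivative g' (x(v:=t))) (at t)" by blast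
  show ?case
  proof (intro bexI[of _ "\<lambda>x. f' x + g' x"] allI)
    fix x t
    show "((\<lambda>s. f (x(v := s)) + g (x(v := s))) has_field_derivative f' (x(v := t)) + g' (x(v := t))) (at t)"
      by (rule DERIV_add[OF df dg])
  qed (use fg in \<open>auto intro!: polyfun.pf_add\<close>)
next
  case (pf_mult f g)
  then obtain f' g' where fg: "f' \<in> polyfun n" "g' \<in> polyfun n"
    and df: "\<And>x t. ((\<lambda>s. f (x(v:=s))) has_field_derivative f' (x(v:=t))) (at t)"
    and dg: "\<And>x t. ((\<lambda>s. g (x(v:=s))) has_field_derivative g' (x(v:=t))) (at t)" by blast
  show ?case
  proof (intro bexI[of _ "\<lambda>x. f' x * g x + f x * g' x"] allI)
    fix x t
    show "((\<lambda>s. f (x(v := s)) * g (x(v := s))) has_field_derivative f' (x(v := t)) * g (x(v := t)) + f (x(v := t)) * g' (x(v := t))) (at t)"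
      using DERIV_mult[OF df dg] by (simp add: algebra_simps)
  qed (use fg pf_mult.hyps in \<open>auto intro!: polyfun.pf_add polyfun.pf_mult\<close>)
qed

lemma ent_UNIV: "(UNIV :: ent set) = {EA, EB, EC, ED}"
  by (auto intro: ent.exhaust)

lemma finite_ent[simp]: "finite (UNIV :: ent set)"
  by (simp add: ent_UNIV)

lemma sum_coords_delta: "w \<in> coords n \<Longrightarrow> (\<Sum>z\<in>coords n. if z = w then c z else 0) = c w"
proof -
  assume "w \<in> coords n"
  moreover have "finite (coords n)" by (simp add: coords_def)
  ultimately show ?thesis by (simp add: sum.delta')
qed

lemma finite_coords[simp]: "finite (coords n)"
  by (simp add: coords_def)

lemma pd_poly: assumes "f \<in> polyfun n" shows "pd v f \<in> polyfun n"
  and "((\<lambda>s. f (x(v:=s))) has_field_derivative pd v f (x(v:=t))) (at t)"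
proof -
  obtain f' where f': "f' \<in> polyfun n" "\<forall>x t. ((\<lambda>s. f (x(v:=s))) has_field_derivative f' (x(v:=t))) (at t)"
    using pf_deriv_ex[OF assms] by blast
  have "pd v f = f'"
  proof
    fix y
    have "pd v f y = f' (y(v := y v))" unfolding pd_def using f'(2) by (intro DERIV_imp_deriv) blast
    then show "pd v f y = f' y" by simp
  qed
  then show "pd v f \<in> polyfun n" "((\<lambda>s. f (x(v:=s))) has_field_derivative pd v f (x(v:=t))) (at t)"
    using f' by auto
qed

lemma pd_unique:
  assumes "\<And>x t. ((\<lambda>s. f (x(v:=s))) has_field_derivative g (x(v:=t))) (at t)"
  shows "pd v f = g"
proof
  fix y
  have "pd v f y = g (y(v := y v))" unfolding pd_def using assms by (intro DERIV_imp_deriv) blast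
  then show "pd v f y = g y" by simp
qed

lemma pd_const[simp]: "pd v (\<lambda>x. c) = (\<lambda>x. 0)"
  by (rule pd_unique) auto

lemma pd_coord: "pd v (\<lambda>x. x w) = (\<lambda>x. if v = w then 1 else 0)"
  by (rule pd_unique) (cases "v = w"; auto)

lemma pd_add: "f \<in> polyfun n \<Longrightarrow> g \<in> polyfun n \<Longrightarrow> pd v (\<lambda>x. f x + g x) = (\<lambda>x. pd v f x + pd v g x)"
  by (rule pd_unique) (auto intro!: derivative_eq_intros pd_poly(2))

lemma pd_mult: "f \<in> polyfun n \<Longrightarrow> g \<in> polyfun n \<Longrightarrow> pd v (\<lambda>x. f x * g x) = (\<lambda>x. pd v f x * g x + f x * pd v g x)"
  by (rule pd_unique) (auto intro!: derivative_eq_intros pd_poly(2))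

lemma pd_scal: "f \<in> polyfun n \<Longrightarrow> pd v (\<lambda>x. c * f x) = (\<lambda>x. c * pd v f x)"
  using pd_mult[of "\<lambda>x. c" n f v] by (simp add: polyfun.pf_const)

lemma pd_sum: "finite S \<Longrightarrow> (\<And>s. s \<in> S \<Longrightarrow> f s \<in> polyfun n) \<Longrightarrow>
   pd v (\<lambda>x. \<Sum>s\<in>S. f s x) = (\<lambda>x. \<Sum>s\<in>S. pd v (f s) x)"
proof (induction S rule: finite_induct)
  case empty then show ?case by simp
next
  case (insert a S)
  have "pd v (\<lambda>x. \<Sum>s\<in>insert a S. f s x) = pd v (\<lambda>x. f a x + (\<Sum>s\<in>S. f s x))"
    using insert by simp
  also have "\<dots> = (\<lambda>x. pd v (f a) x + pd v (\<lambda>x. \<Sum>s\<in>S. f s x) x)"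
    using insert by (intro pd_add pf_sum) auto
  finally show ?case using insert by simp
qed

lemma pf_chain:
  assumes "f \<in> polyfun n"
  shows "((\<lambda>t. f (\<lambda>z. x z + t * c z)) has_field_derivative
           (\<Sum>z\<in>coords n. c z * pd z f (\<lambda>z. x z + t0 * c z))) (at t0)"
  using assms
proof (induction rule: polyfun.induct)
  case (pf_const c)
  then show ?case by simp
next
  case (pf_coord i e)
  have "(\<Sum>z\<in>coords n. c z * pd z (\<lambda>x. x (e, i)) (\<lambda>z. x z + t0 * c z)) = c (e,i)"
    using pf_coord by (simp add: pd_coord if_distrib sum_coords_delta[of "(e,i)"] coords_def cong: if_cong)
  then show ?case by (auto intro!: derivative_eq_intros)
next
  case (pf_add f g)
  then show ?case
    using DERIV_add[OF pf_add.IH] by (simp add: pd_add sum.distrib algebra_simps)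
next
  case (pf_mult f g)
  then show ?case
    using DERIV_mult[OF pf_mult.IH]
    by (simp add: pd_mult sum_distrib_left sum_distrib_right sum.distrib algebra_simps)
qed

definition jac :: "nat \<Rightarrow> (ent \<times> nat \<Rightarrow> ent \<times> nat \<Rightarrow> pt \<Rightarrow> complex)
    \<Rightarrow> (pt \<Rightarrow> complex) \<Rightarrow> (pt \<Rightarrow> complex) \<Rightarrow> (pt \<Rightarrow> complex) \<Rightarrow> pt \<Rightarrow> complex" where
  "jac n P f g h x = pbr n P f (pbr n P g h) x + pbr n P g (pbr n P h f) x + pbr n P h (pbr n P f g) x"

lemma jac_cyc: "jac n P f g h x = jac n P g h f x"
  unfolding jac_def by (simp add: algebra_simps)

locale bra =
  fixes n :: nat and P :: "ent \<times> nat \<Rightarrow> ent \<times> nat \<Rightarrow> pt \<Rightarrow> complex"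
  assumes Ppf: "\<And>v w. v \<in> coords n \<Longrightarrow> w \<in> coords n \<Longrightarrow> P v w \<in> polyfun n"
  and Pskew: "skew_on n P"
begin

abbreviation br where "br \<equiv> pbr n P"

lemma br_pf: "f \<in> polyfun n \<Longrightarrow> g \<in> polyfun n \<Longrightarrow> br f g \<in> polyfun n"
  unfolding pbr_def
  apply (rule pf_sum, simp)+
  apply (rule polyfun.pf_mult)+
  by (auto intro: Ppf pd_poly(1))

lemma br_skew: "br f g x = - br g f x"
proof -
  have "br f g x = (\<Sum>w\<in>coords n. \<Sum>v\<in>coords n. P v w x * pd v f x * pd w g x)"
    unfolding pbr_def by (rule sum.swap)
  also have "\<dots> = (\<Sum>w\<in>coords n. \<Sum>v\<in>coords n. - (P w v x * pd w g x * pd v f x))"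
  proof (intro sum.cong refl)
    fix w v assume "w \<in> coords n" "v \<in> coords n"
    then have "P v w x = - P w v x" using Pskew unfolding skew_on_def by blast
    then show "P v w x * pd v f x * pd w g x = - (P w v x * pd w g x * pd v f x)" by simp
  qed
  also have "\<dots> = - br g f x" unfolding pbr_def by (simp add: sum_negf)
  finally show ?thesis .
qed

lemma br_const_left[simp]: "br (\<lambda>x. c) g = (\<lambda>x. 0)"
  unfolding pbr_def by simp

lemma br_const_right[simp]: "br f (\<lambda>x. c) = (\<lambda>x. 0)"
  unfolding pbr_def by simp

lemma br_add_left: "f1 \<in> polyfun n \<Longrightarrow> f2 \<in> polyfun n \<Longrightarrow>
   br (\<lambda>x. f1 x + f2 x) g = (\<lambda>x. br f1 g x + br f2 g x)"
  unfolding pbr_def by (simp add: pd_add algebra_simps sum.distrib)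

lemma br_mult_left: "f1 \<in> polyfun n \<Longrightarrow> f2 \<in> polyfun n \<Longrightarrow>
   br (\<lambda>x. f1 x * f2 x) g = (\<lambda>x. f1 x * br f2 g x + f2 x * br f1 g x)"
  unfolding pbr_def by (simp add: pd_mult algebra_simps sum.distrib sum_distrib_left)

lemma br_add_right: "f1 \<in> polyfun n \<Longrightarrow> f2 \<in> polyfun n \<Longrightarrow>
   br g (\<lambda>x. f1 x + f2 x) = (\<lambda>x. br g f1 x + br g f2 x)"
  unfolding pbr_def by (simp add: pd_add algebra_simps sum.distrib)

lemma br_mult_right: "f1 \<in> polyfun n \<Longrightarrow> f2 \<in> polyfun n \<Longrightarrow>
   br g (\<lambda>x. f1 x * f2 x) = (\<lambda>x. f1 x * br g f2 x + f2 x * br g f1 x)"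
  unfolding pbr_def by (simp add: pd_mult algebra_simps sum.distrib sum_distrib_left)

lemma br_coord: "u \<in> coords n \<Longrightarrow> br (\<lambda>x. x u) h = (\<lambda>x. \<Sum>w\<in>coords n. P u w x * pd w h x)"
proof -
  assume u: "u \<in> coords n"
  show ?thesis
  proof
    fix x
    have "br (\<lambda>x. x u) h x = (\<Sum>v\<in>coords n. if v = u then (\<Sum>w\<in>coords n. P u w x * pd w h x) else 0)"
      unfolding pbr_def pd_coord by (intro sum.cong refl) (auto simp: sum_distrib_left)
    also have "\<dots> = (\<Sum>w\<in>coords n. P u w x * pd w h x)" using u by (rule sum_coords_delta)
    finally show "br (\<lambda>x. x u) h x = (\<Sum>w\<in>coords n. P u w x * pd w h x)" .
  qed
qed

lemma br_coord2: "u \<in> coords n \<Longrightarrow> w \<in> coords n \<Longrightarrow> br (\<lambda>x. x u) (\<lambda>x. x w) = P u w"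
  by (simp add: br_coord pd_coord if_distrib sum_coords_delta cong: if_cong)

abbreviation J where "J \<equiv> jac n P"

lemma jac_const: "J (\<lambda>x. c) g h x = 0"
  unfolding jac_def by simp

lemma jac_add: "f1 \<in> polyfun n \<Longrightarrow> f2 \<in> polyfun n \<Longrightarrow> g \<in> polyfun n \<Longrightarrow> h \<in> polyfun n \<Longrightarrow>
  J (\<lambda>x. f1 x + f2 x) g h x = J f1 g h x + J f2 g h x"
  unfolding jac_def by (simp add: br_add_left br_add_right br_pf)

lemma jac_mult: "f1 \<in> polyfun n \<Longrightarrow> f2 \<in> polyfun n \<Longrightarrow> g \<in> polyfun n \<Longrightarrow> h \<in> polyfun n \<Longrightarrow>
  J (\<lambda>x. f1 x * f2 x) g h x = f1 x * J f2 g h x + f2 x * J f1 g h x"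
  unfolding jac_def
  apply (simp add: br_mult_left br_mult_right br_add_left br_add_right br_pf polyfun.pf_mult)
  apply (simp add: br_skew[of f2 g x] br_skew[of f1 g x] br_skew[of h f1 x] br_skew[of h f2 x] algebra_simps)
  done

lemma jac_zero:
  assumes base: "\<And>u v w x. u \<in> coords n \<Longrightarrow> v \<in> coords n \<Longrightarrow> w \<in> coords n \<Longrightarrow>
     J (\<lambda>x. x u) (\<lambda>x. x v) (\<lambda>x. x w) x = 0"
  assumes "f \<in> polyfun n" "g \<in> polyfun n" "h \<in> polyfun n"
  shows "J f g h x = 0"
proof -
  have s1: "J (\<lambda>x. x u) (\<lambda>x. x v) h x = 0" if "u \<in> coords n" "v \<in> coords n" "h \<in> polyfun n" for u v h x
    using that(3)
  proof (induction arbitrary: x rule: polyfun.induct)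
    case (pf_const c) then show ?case by (simp add: jac_cyc[of n P "\<lambda>x. x u"] jac_cyc[of n P "\<lambda>x. x v"] jac_const)
  next
    case (pf_coord i e) then show ?case using base that by (auto simp: coords_def)
  next
    case (pf_add f g)
    have "J f (\<lambda>x. x u) (\<lambda>x. x v) x = 0" "J g (\<lambda>x. x u) (\<lambda>x. x v) x = 0"
      using pf_add.IH by (simp_all add: jac_cyc[of n P f] jac_cyc[of n P g])
    then show ?case
      using that pf_add.hyps by (simp add: jac_cyc[of n P "\<lambda>x. f x + g x", symmetric] jac_add pf_coord')
  next
    case (pf_mult f g)
    have "J f (\<lambda>x. x u) (\<lambda>x. x v) x = 0" "J g (\<lambda>x. x u) (\<lambda>x. x v) x = 0"
      using pf_mult.IH by (simp_all add: jac_cyc[of n P f] jac_cyc[of n P g])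
    then show ?case
      using that pf_mult.hyps by (simp add: jac_cyc[of n P "\<lambda>x. f x * g x", symmetric] jac_mult pf_coord')
  qed
  have s2: "J (\<lambda>x. x u) g h x = 0" if "u \<in> coords n" "g \<in> polyfun n" "h \<in> polyfun n" for u g h x
    using that(2,3)
  proof (induction arbitrary: h x rule: polyfun.induct)
    case (pf_const c) then show ?case by (simp add: jac_cyc[of n P "\<lambda>x. x u"] jac_const)
  next
    case (pf_coord i e) then show ?case using s1 that by (auto simp: coords_def)
  next
    case (pf_add f g)
    have "J f h (\<lambda>x. x u) x = 0" "J g h (\<lambda>x. x u) x = 0"
      using pf_add.IH pf_add.prems by (metis jac_cyc)+
    then show ?case
      using that pf_add.hyps pf_add.prems by (simp add: jac_cyc[of n P _ "\<lambda>x. f x + g x"] jac_add pf_coord')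
  next
    case (pf_mult f g)
    have "J f h (\<lambda>x. x u) x = 0" "J g h (\<lambda>x. x u) x = 0"
      using pf_mult.IH pf_mult.prems by (metis jac_cyc)+
    then show ?case
      using that pf_mult.hyps pf_mult.prems by (simp add: jac_cyc[of n P _ "\<lambda>x. f x * g x"] jac_mult pf_coord')
  qed
  show ?thesis using assms(2-4)
  proof (induction arbitrary: g h x rule: polyfun.induct)
    case (pf_const c) then show ?case by (simp add: jac_const)
  next
    case (pf_coord i e) then show ?case using s2 by (auto simp: coords_def)
  next
    case (pf_add f g) then show ?case by (simp add: jac_add)
  next
    case (pf_mult f g) then show ?case by (simp add: jac_mult)
  qed
qed

lemma jac_coords: "u \<in> coords n \<Longrightarrow> v \<in> coords n \<Longrightarrow> w \<in> coords n \<Longrightarrow>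
  J (\<lambda>x. x u) (\<lambda>x. x v) (\<lambda>x. x w) x =
   (\<Sum>z\<in>coords n. P u z x * pd z (P v w) x + P v z x * pd z (P w u) x + P w z x * pd z (P u v) x)"
  unfolding jac_def by (simp add: br_coord2 br_coord sum.distrib)

lemma poisson:
  assumes "\<And>u v w x. u \<in> coords n \<Longrightarrow> v \<in> coords n \<Longrightarrow> w \<in> coords n \<Longrightarrow>
    (\<Sum>z\<in>coords n. P u z x * pd z (P v w) x + P v z x * pd z (P w u) x + P w z x * pd z (P u v) x) = 0"
  shows "is_poisson n P"
  unfolding is_poisson_def
proof (intro ballI conjI allI)
  fix f g h x assume f: "f \<in> polyfun n" and g: "g \<in> polyfun n" and h: "h \<in> polyfun n"
  show "br f g \<in> polyfun n" using f g by (rule br_pf)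
  show "br f g = (\<lambda>x. - br g f x)" using br_skew by blast
  show "br f (br g h) x + br g (br h f) x + br h (br f g) x = 0"
    using jac_zero[of f g h x] assms jac_coords f g h unfolding jac_def by simp
qed

end

lemma sum_rev_index: "(\<Sum>i=1..(n::nat). h (n - i)) = (\<Sum>k<n. (h k :: 'a::comm_monoid_add))"
  by (rule sum.reindex_bij_witness[of _ "\<lambda>k. n - k" "\<lambda>i. n - i"]) (auto simp: diff_diff_cancel)

lemma swap3: "(\<Sum>x\<in>X. \<Sum>y\<in>Y. \<Sum>z\<in>Z. h x y z) = (\<Sum>y\<in>Y. \<Sum>z\<in>Z. \<Sum>x\<in>X. h x y z)"
  by (subst sum.swap) (rule sum.cong[OF refl], rule sum.swap)

lemma swap4: "(\<Sum>p\<in>P. \<Sum>q\<in>Q. \<Sum>a\<in>A. \<Sum>b\<in>B. h p q a b) = (\<Sum>a\<in>A. \<Sum>b\<in>B. \<Sum>p\<in>P. \<Sum>q\<in>Q. h p q a b)"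
proof -
  have "(\<Sum>p\<in>P. \<Sum>q\<in>Q. \<Sum>a\<in>A. \<Sum>b\<in>B. h p q a b) = (\<Sum>p\<in>P. \<Sum>a\<in>A. \<Sum>b\<in>B. \<Sum>q\<in>Q. h p q a b)"
    by (rule sum.cong[OF refl], rule swap3)
  also have "\<dots> = (\<Sum>a\<in>A. \<Sum>b\<in>B. \<Sum>p\<in>P. \<Sum>q\<in>Q. h p q a b)" by (rule swap3)
  finally show ?thesis .
qed

lemma dsum2: "finite A \<Longrightarrow> finite B \<Longrightarrow>
  (\<Sum>a\<in>A. \<Sum>b\<in>B. if a = a0 \<and> b = b0 then h a b else 0) = (if a0 \<in> A \<and> b0 \<in> B then h a0 b0 else 0)"
proof -
  assume fin: "finite A" "finite B"
  have "(\<Sum>a\<in>A. \<Sum>b\<in>B. if a = a0 \<and> b = b0 then h a b else 0) = (\<Sum>a\<in>A. if a = a0 then (\<Sum>b\<in>B. if b = b0 then h a b else 0) else 0)"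
    by (intro sum.cong) auto
  then show ?thesis using fin by simp
qed

lemma coef1:
  fixes c :: "nat \<Rightarrow> complex"
  assumes "finite K" "\<And>l. l \<notin> K \<Longrightarrow> (\<Sum>i=1..n. c i * l ^ (n - i)) = 0" "i \<in> {1..n}"
  shows "c i = 0"
proof -
  define d where "d k = (if k < n then c (n - k) else 0)" for k
  have eq: "(\<Sum>k\<le>n. d k * z ^ k) = (\<Sum>i=1..n. c i * z ^ (n - i))" for z
  proof -
    have "(\<Sum>k\<le>n. d k * z ^ k) = (\<Sum>k<n. d k * z ^ k)"
      by (simp add: lessThan_Suc_atMost[symmetric] d_def)
    also have "\<dots> = (\<Sum>k<n. c (n - k) * z ^ k)" by (simp add: d_def)
    also have "\<dots> = (\<Sum>i=1..n. c (n - (n - i)) * z ^ (n - i))"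
      by (rule sum_rev_index[of "\<lambda>k. c (n - k) * z ^ k", symmetric])
    also have "\<dots> = (\<Sum>i=1..n. c i * z ^ (n - i))" by (intro sum.cong) auto
    finally show ?thesis .
  qed
  have "- K \<subseteq> {z. (\<Sum>k\<le>n. d k * z ^ k) = 0}" using assms(2) eq by auto
  moreover have "infinite (- K)" using assms(1) by (simp add: Compl_eq_Diff_UNIV infinite_UNIV_char_0)
  ultimately have "infinite {z. (\<Sum>k\<le>n. d k * z ^ k) = 0}" using finite_subset by blast
  then have "\<forall>k\<le>n. d k = 0" using polyfun_finite_roots by blast
  then have "d (n - i) = 0" by simp
  then show ?thesis using assms(3) by (simp add: d_def)
qed

lemma coef2:
  fixes S :: "nat \<Rightarrow> nat \<Rightarrow> complex"
  assumes "\<And>l m. l \<noteq> m \<Longrightarrow> (\<Sum>i=1..n. \<Sum>j=1..n. S i j * l ^ (n - i) * m ^ (n - j)) = 0"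
    "i \<in> {1..n}" "j \<in> {1..n}"
  shows "S i j = 0"
proof -
  have "(\<Sum>j=1..n. S i j * m ^ (n - j)) = 0" for m
  proof (rule coef1[of "{m}" "\<lambda>i. \<Sum>j=1..n. S i j * m ^ (n - j)" n i])
    fix l assume "l \<notin> {m}"
    then show "(\<Sum>i=1..n. (\<Sum>j=1..n. S i j * m ^ (n - j)) * l ^ (n - i)) = 0"
      using assms(1)[of l m] by (simp add: sum_distrib_right sum_distrib_left mult_ac)
  qed (use assms in auto)
  then show ?thesis
    using coef1[where K="{}" and c="\<lambda>j. S i j" and n=n and i=j] assms by auto
qed

lemma coef3:
  fixes S :: "nat \<Rightarrow> nat \<Rightarrow> nat \<Rightarrow> complex"
  assumes "\<And>l m p. l \<noteq> m \<Longrightarrow> m \<noteq> p \<Longrightarrow> l \<noteq> p \<Longrightarrow>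
     (\<Sum>i=1..n. \<Sum>j=1..n. \<Sum>k=1..n. S i j k * l ^ (n - i) * m ^ (n - j) * p ^ (n - k)) = 0"
    "i \<in> {1..n}" "j \<in> {1..n}" "k \<in> {1..n}"
  shows "S i j k = 0"
proof -
  have "(\<Sum>j=1..n. \<Sum>k=1..n. S i j k * m ^ (n - j) * p ^ (n - k)) = 0" if "m \<noteq> p" for m p
  proof (rule coef1[of "{m,p}" "\<lambda>i. \<Sum>j=1..n. \<Sum>k=1..n. S i j k * m ^ (n - j) * p ^ (n - k)" n i])
    fix l assume "l \<notin> {m,p}"
    then show "(\<Sum>i=1..n. (\<Sum>j=1..n. \<Sum>k=1..n. S i j k * m ^ (n - j) * p ^ (n - k)) * l ^ (n - i)) = 0"
      using assms(1)[of l m p] that by (simp add: sum_distrib_right sum_distrib_left mult_ac)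
  qed (use assms in auto)
  then show ?thesis
    using coef2[where n=n and S="\<lambda>j k. S i j k" and i=j and j=k] assms by auto
qed

definition cf :: "nat \<Rightarrow> complex \<Rightarrow> ent \<Rightarrow> pt \<Rightarrow> nat \<Rightarrow> complex" where
  "cf n c e x a = (if a = n then c else if a < n then x (e, n - a) else 0)"

lemma entry_cf: "entry n c e x l = (\<Sum>a\<le>n. cf n c e x a * l ^ a)"
proof -
  have "(\<Sum>a\<le>n. cf n c e x a * l ^ a) = (\<Sum>a<n. cf n c e x a * l ^ a) + c * l ^ n"
    by (simp add: lessThan_Suc_atMost[symmetric] cf_def)
  also have "(\<Sum>a<n. cf n c e x a * l ^ a) = (\<Sum>a<n. x (e, n - a) * l ^ a)"
    by (intro sum.cong) (auto simp: cf_def)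
  also have "\<dots> = (\<Sum>i=1..n. x (e, n - (n - i)) * l ^ (n - i))"
    by (rule sum_rev_index[of "\<lambda>a. x (e, n - a) * l ^ a", symmetric])
  also have "\<dots> = (\<Sum>i=1..n. x (e, i) * l ^ (n - i))" by (intro sum.cong) auto
  finally show ?thesis unfolding entry_def by simp
qed

lemma pf_cf: "(\<lambda>x. cf n c e x a) \<in> polyfun n"
proof (cases "a < n")
  case True
  then have "(\<lambda>x. cf n c e x a) = (\<lambda>x. x (e, n - a))" by (auto simp: cf_def)
  then show ?thesis using True by (auto intro: polyfun.pf_coord)
next
  case False
  then have "(\<lambda>x. cf n c e x a) = (\<lambda>x. if a = n then c else 0)" by (auto simp: cf_def)
  then show ?thesis by (simp add: polyfun.pf_const)
qed

lemma cf_top[simp]: "cf n c e x n = c" by (simp add: cf_def)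

definition kap :: "nat \<Rightarrow> nat \<Rightarrow> nat \<Rightarrow> nat \<Rightarrow> complex" where
  "kap a b p q = (if p + q + 1 = a + b \<and> b \<le> p \<and> b \<le> q then 1 else 0)"

lemma kap_alt: "b < a \<Longrightarrow> kap a b p q = (if q = a + b - 1 - p \<and> b \<le> p \<and> p < a then 1 else 0)"
  unfolding kap_def by (rule if_cong) auto

lemma kap_zero: "a \<le> b \<Longrightarrow> kap a b p q = 0"
  unfolding kap_def by auto

lemma K1:
  fixes l m :: complex
  assumes "b < a" "a \<le> N"
  shows "(l - m) * (\<Sum>p<N. \<Sum>q<N. kap a b p q * l ^ p * m ^ q) = l ^ a * m ^ b - l ^ b * m ^ a"
proof -
  have inner: "(\<Sum>q<N. kap a b p q * l ^ p * m ^ q) = (if b \<le> p \<and> p < a then l ^ p * m ^ (a + b - 1 - p) else 0)" for p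
  proof -
    have "(\<Sum>q<N. kap a b p q * l ^ p * m ^ q) =
       (\<Sum>q<N. if q = a + b - 1 - p then (if b \<le> p \<and> p < a then l ^ p * m ^ q else 0) else 0)"
      using assms(1) by (intro sum.cong refl) (auto simp: kap_alt)
    also have "\<dots> = (if a + b - 1 - p < N then (if b \<le> p \<and> p < a then l ^ p * m ^ (a + b - 1 - p) else 0) else 0)"
      by (simp add: sum.delta)
    also have "\<dots> = (if b \<le> p \<and> p < a then l ^ p * m ^ (a + b - 1 - p) else 0)"
      using assms by auto
    finally show ?thesis .
  qed
  have "(\<Sum>p<N. \<Sum>q<N. kap a b p q * l ^ p * m ^ q) = (\<Sum>p<N. if p \<in> {b..<a} then l ^ p * m ^ (a + b - 1 - p) else 0)"
    by (simp add: inner)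
  also have "\<dots> = (\<Sum>p\<in>{..<N} \<inter> {b..<a}. l ^ p * m ^ (a + b - 1 - p))"
    by (rule sum.inter_restrict[symmetric]) simp
  also have "{..<N} \<inter> {b..<a} = {b..<a}" using assms by auto
  also have "(\<Sum>p\<in>{b..<a}. l ^ p * m ^ (a + b - 1 - p)) = (\<Sum>s\<in>{0..<a - b}. l ^ (b + s) * m ^ (a + b - 1 - (b + s)))"
    using sum.atLeastLessThan_shift_0[of "\<lambda>p. l ^ p * m ^ (a + b - 1 - p)" b a] by (simp add: comp_def)
  also have "\<dots> = l ^ b * m ^ b * (\<Sum>s<a - b. m ^ (a - b - Suc s) * l ^ s)"
    unfolding sum_distrib_left
  proof (intro sum.cong)
    fix s assume "s \<in> {..<a - b}"
    then have "a + b - 1 - (b + s) = b + (a - b - Suc s)" using assms by auto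
    then show "l ^ (b + s) * m ^ (a + b - 1 - (b + s)) = l ^ b * m ^ b * (m ^ (a - b - Suc s) * l ^ s)"
      by (simp add: power_add)
  qed (auto simp: lessThan_atLeast0)
  finally have "(l - m) * (\<Sum>p<N. \<Sum>q<N. kap a b p q * l ^ p * m ^ q) = l ^ b * m ^ b * ((l - m) * (\<Sum>s<a - b. m ^ (a - b - Suc s) * l ^ s))"
    by (simp add: algebra_simps)
  also have "\<dots> = l ^ b * m ^ b * (l ^ (a - b) - m ^ (a - b))"
    by (simp add: power_diff_sumr2)
  also have "\<dots> = l ^ (b + (a - b)) * m ^ b - l ^ b * m ^ (b + (a - b))"
    by (simp add: power_add algebra_simps)
  also have "\<dots> = l ^ a * m ^ b - l ^ b * m ^ a" using assms by simp
  finally show ?thesis .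
qed

lemma K2:
  fixes l m :: complex
  assumes "a \<le> N" "b \<le> N"
  shows "(l - m) * (\<Sum>p<N. \<Sum>q<N. (kap a b p q - kap b a p q) * l ^ p * m ^ q) = l ^ a * m ^ b - l ^ b * m ^ a"
proof (cases a b rule: linorder_cases)
  case less
  then have "(\<Sum>p<N. \<Sum>q<N. (kap a b p q - kap b a p q) * l ^ p * m ^ q) = - (\<Sum>p<N. \<Sum>q<N. kap b a p q * l ^ p * m ^ q)"
    by (simp add: kap_zero sum_negf)
  then show ?thesis using K1[OF less assms(2), of l m] by (simp add: algebra_simps)
next
  case equal then show ?thesis by simp
next
  case greater
  then have "(\<Sum>p<N. \<Sum>q<N. (kap a b p q - kap b a p q) * l ^ p * m ^ q) = (\<Sum>p<N. \<Sum>q<N. kap a b p q * l ^ p * m ^ q)"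
    by (simp add: kap_zero)
  then show ?thesis using K1[OF greater assms(1), of l m] by simp
qed

definition ddc :: "nat \<Rightarrow> (nat \<Rightarrow> complex) \<Rightarrow> (nat \<Rightarrow> complex) \<Rightarrow> nat \<Rightarrow> nat \<Rightarrow> complex" where
  "ddc N f g p q = (\<Sum>a\<le>N. \<Sum>b\<le>N. f a * g b * (kap a b p q - kap b a p q))"

lemma DD:
  fixes l m :: complex
  shows "(l - m) * (\<Sum>p<N. \<Sum>q<N. ddc N f g p q * l ^ p * m ^ q) =
    (\<Sum>a\<le>N. f a * l ^ a) * (\<Sum>b\<le>N. g b * m ^ b) - (\<Sum>a\<le>N. f a * m ^ a) * (\<Sum>b\<le>N. g b * l ^ b)"
proof -
  have "(\<Sum>p<N. \<Sum>q<N. ddc N f g p q * l ^ p * m ^ q) =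
     (\<Sum>a\<le>N. \<Sum>b\<le>N. f a * g b * (\<Sum>p<N. \<Sum>q<N. (kap a b p q - kap b a p q) * l ^ p * m ^ q))"
    unfolding ddc_def sum_distrib_right sum_distrib_left swap4[where P="{..<N}" and Q="{..<N}" and A="{..N}" and B="{..N}"]
    by (simp add: mult_ac)
  then have "(l - m) * (\<Sum>p<N. \<Sum>q<N. ddc N f g p q * l ^ p * m ^ q) =
     (\<Sum>a\<le>N. \<Sum>b\<le>N. f a * g b * ((l - m) * (\<Sum>p<N. \<Sum>q<N. (kap a b p q - kap b a p q) * l ^ p * m ^ q)))"
    by (simp add: sum_distrib_left algebra_simps)
  also have "\<dots> = (\<Sum>a\<le>N. \<Sum>b\<le>N. f a * g b * (l ^ a * m ^ b - l ^ b * m ^ a))"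
    by (intro sum.cong refl) (simp add: K2)
  also have "\<dots> = (\<Sum>a\<le>N. f a * l ^ a) * (\<Sum>b\<le>N. g b * m ^ b) - (\<Sum>a\<le>N. f a * m ^ a) * (\<Sum>b\<le>N. g b * l ^ b)"
    by (simp add: sum_product algebra_simps sum_subtractf)
  finally show ?thesis .
qed

lemma ddc_zero_q: "N \<le> q \<Longrightarrow> ddc N f g p q = 0"
  unfolding ddc_def kap_def by (intro sum.neutral ballI) auto

lemma ddc_top:
  assumes "1 \<le> N" "q < N"
  shows "ddc N f g (N - 1) q = f N * g q - f q * g N"
proof -
  have "ddc N f g (N - 1) q = (\<Sum>a\<le>N. \<Sum>b\<le>N. if a = N \<and> b = q then f a * g b else 0)
      - (\<Sum>a\<le>N. \<Sum>b\<le>N. if a = q \<and> b = N then f a * g b else 0)"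
    unfolding ddc_def kap_def using assms
    by (simp add: sum_subtractf[symmetric] right_diff_distrib, intro sum.cong refl) auto
  also have "\<dots> = f N * g q - f q * g N"
    using assms by (simp add: dsum2)
  finally show ?thesis .
qed

lemma pf_ddc: "(\<lambda>x. ddc n (cf n c1 e1 x) (cf n c2 e2 x) p q) \<in> polyfun n"
  unfolding ddc_def
  by (intro pf_sum polyfun.pf_mult pf_cf polyfun.pf_const) auto

definition npsi0 :: "ent \<Rightarrow> ent \<Rightarrow> (ent \<Rightarrow> complex) \<Rightarrow> (ent \<Rightarrow> complex) \<Rightarrow> complex \<Rightarrow> complex \<Rightarrow> complex" where
  "npsi0 X Y L M l m = (case (X,Y) of
      (EB,EA) \<Rightarrow> L EB * M EA - M EB * L EA
    | (EA,EB) \<Rightarrow> M EB * L EA - L EB * M EA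
    | (EC,EA) \<Rightarrow> - (L EC * M EA - M EC * L EA)
    | (EA,EC) \<Rightarrow> - (M EC * L EA - L EC * M EA)
    | (EB,EC) \<Rightarrow> L ED * M EA - M ED * L EA
    | (EC,EB) \<Rightarrow> M ED * L EA - L ED * M EA
    | (EB,ED) \<Rightarrow> - (L EB * M ED - M EB * L ED)
    | (ED,EB) \<Rightarrow> - (M EB * L ED - L EB * M ED)
    | (EC,ED) \<Rightarrow> L EC * M ED - M EC * L ED
    | (ED,EC) \<Rightarrow> M EC * L ED - L EC * M ED
    | (EA,ED) \<Rightarrow> L EC * M EB - M EC * L EB
    | (ED,EA) \<Rightarrow> M EC * L EB - L EC * M EB
    | _ \<Rightarrow> 0)"

definition npsi1 :: "complex \<Rightarrow> complex \<Rightarrow> complex \<Rightarrow> ent \<Rightarrow> ent \<Rightarrow> (ent \<Rightarrow> complex) \<Rightarrow> (ent \<Rightarrow> complex) \<Rightarrow> complex \<Rightarrow> complex \<Rightarrow> complex" where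
  "npsi1 bb cc dd X Y L M l m = (case (X,Y) of
      (EB,EA) \<Rightarrow> l * L EB * M EA - m * M EB * L EA - bb * L EA * M EA * (l - m)
    | (EA,EB) \<Rightarrow> m * M EB * L EA - l * L EB * M EA + bb * L EA * M EA * (l - m)
    | (EC,EA) \<Rightarrow> - (l * L EC * M EA - m * M EC * L EA) + cc * L EA * M EA * (l - m)
    | (EA,EC) \<Rightarrow> - (m * M EC * L EA - l * L EC * M EA) - cc * L EA * M EA * (l - m)
    | (EB,EC) \<Rightarrow> l * L ED * M EA - m * M ED * L EA - dd * L EA * M EA * (l - m)
    | (EC,EB) \<Rightarrow> m * M ED * L EA - l * L ED * M EA + dd * L EA * M EA * (l - m)
    | (EB,ED) \<Rightarrow> - l * (L EB * M ED - M EB * L ED) + L EA * (bb * M ED - dd * M EB) * (l - m)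
    | (ED,EB) \<Rightarrow> - m * (M EB * L ED - L EB * M ED) - M EA * (bb * L ED - dd * L EB) * (l - m)
    | (EC,ED) \<Rightarrow> l * (L EC * M ED - M EC * L ED) - L EA * (cc * M ED - dd * M EC) * (l - m)
    | (ED,EC) \<Rightarrow> m * (M EC * L ED - L EC * M ED) + M EA * (cc * L ED - dd * L EC) * (l - m)
    | (EA,ED) \<Rightarrow> l * (L EC * M EB - M EC * L EB) - L EA * (cc * M EB - bb * M EC) * (l - m)
    | (ED,EA) \<Rightarrow> m * (M EC * L EB - L EC * M EB) + M EA * (cc * L EB - bb * L EC) * (l - m)
    | (ED,ED) \<Rightarrow> (cc * (L ED * M EB - M ED * L EB) - bb * (L ED * M EC - M ED * L EC) + dd * (L EB * M EC - M EB * L EC)) * (l - m)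
    | _ \<Rightarrow> 0)"

definition npsi where
  "npsi A B bb cc dd X Y L M l m = A * npsi0 X Y L M l m + B * npsi1 bb cc dd X Y L M l m"

definition jacN where
  "jacN A B bb cc dd X Y Z EL EM EP l m p =
     npsi A B bb cc dd Y Z (\<lambda>e. npsi A B bb cc dd X e EL EM l m) EP m p * (p - l)
   - npsi A B bb cc dd Y Z EM (\<lambda>e. npsi A B bb cc dd X e EL EP l p) m p * (l - m)
   + npsi A B bb cc dd Z X (\<lambda>e. npsi A B bb cc dd Y e EM EP m p) EL p l * (l - m)
   - npsi A B bb cc dd Z X EP (\<lambda>e. npsi A B bb cc dd Y e EM EL m l) p l * (m - p)
   + npsi A B bb cc dd X Y (\<lambda>e. npsi A B bb cc dd Z e EP EL p l) EM l m * (m - p)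
   - npsi A B bb cc dd X Y EL (\<lambda>e. npsi A B bb cc dd Z e EP EM p m) l m * (p - l)"

lemma jacN_zero: "jacN A B bb cc dd X Y Z EL EM EP l m p = 0"
  apply (induct X; induct Y; induct Z)
  apply (simp_all add: jacN_def npsi_def npsi0_def npsi1_def)
  apply algebra+
  done

lemma npsi_add_l: "npsi A B bb cc dd X Y (\<lambda>e. L e + L' e) M l m = npsi A B bb cc dd X Y L M l m + npsi A B bb cc dd X Y L' M l m"
  by (induct X; induct Y) (simp_all add: npsi_def npsi0_def npsi1_def algebra_simps)

lemma npsi_add_r: "npsi A B bb cc dd X Y L (\<lambda>e. M e + M' e) l m = npsi A B bb cc dd X Y L M l m + npsi A B bb cc dd X Y L M' l m"
  by (induct X; induct Y) (simp_all add: npsi_def npsi0_def npsi1_def algebra_simps)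

lemma npsi_scale_l: "npsi A B bb cc dd X Y (\<lambda>e. c * L e) M l m = c * npsi A B bb cc dd X Y L M l m"
  by (induct X; induct Y) (simp_all add: npsi_def npsi0_def npsi1_def algebra_simps)

lemma npsi_scale_r: "npsi A B bb cc dd X Y L (\<lambda>e. c * M e) l m = c * npsi A B bb cc dd X Y L M l m"
  by (induct X; induct Y) (simp_all add: npsi_def npsi0_def npsi1_def algebra_simps)

lemma npsi_skew: "npsi A B bb cc dd Y X M L m l = npsi A B bb cc dd X Y L M l m"
  by (induct X; induct Y) (simp_all add: npsi_def npsi0_def npsi1_def algebra_simps)

definition lead :: "complex \<Rightarrow> complex \<Rightarrow> complex \<Rightarrow> complex \<Rightarrow> ent \<Rightarrow> complex" where
  "lead \<alpha> \<beta> \<gamma> \<delta> e = (case e of EA \<Rightarrow> \<alpha> | EB \<Rightarrow> \<beta> | EC \<Rightarrow> \<gamma> | ED \<Rightarrow> \<delta>)"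

definition Ev :: "nat \<Rightarrow> complex \<Rightarrow> complex \<Rightarrow> complex \<Rightarrow> complex \<Rightarrow> pt \<Rightarrow> complex \<Rightarrow> ent \<Rightarrow> complex" where
  "Ev n \<alpha> \<beta> \<gamma> \<delta> x l e = entry n (lead \<alpha> \<beta> \<gamma> \<delta> e) e x l"

lemma Ev_simps[simp]: "Ev n \<alpha> \<beta> \<gamma> \<delta> x l EA = entry n \<alpha> EA x l" "Ev n \<alpha> \<beta> \<gamma> \<delta> x l EB = entry n \<beta> EB x l"
  "Ev n \<alpha> \<beta> \<gamma> \<delta> x l EC = entry n \<gamma> EC x l" "Ev n \<alpha> \<beta> \<gamma> \<delta> x l ED = entry n \<delta> ED x l"
  by (simp_all add: Ev_def lead_def)

definition psiv where
  "psiv A B bb cc dd X Y L M l m = npsi A B bb cc dd X Y L M l m / (l - m)"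

definition GSp where
  "GSp n \<alpha> \<beta> \<gamma> \<delta> P A B bb cc dd \<longleftrightarrow> (\<forall>X Y x l m. l \<noteq> m \<longrightarrow>
     genbr n P X Y x l m = psiv A B bb cc dd X Y (Ev n \<alpha> \<beta> \<gamma> \<delta> x l) (Ev n \<alpha> \<beta> \<gamma> \<delta> x m) l m)"

lemma genbr_skew:
  assumes "skew_on n P"
  shows "genbr n P Y X x l m = - genbr n P X Y x m l"
proof -
  have "genbr n P Y X x l m = (\<Sum>j=1..n. \<Sum>i=1..n. P (Y, i) (X, j) x * l ^ (n - i) * m ^ (n - j))"
    unfolding genbr_def by (rule sum.swap)
  also have "\<dots> = (\<Sum>j=1..n. \<Sum>i=1..n. - (P (X, j) (Y, i) x * m ^ (n - j) * l ^ (n - i)))"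
  proof (intro sum.cong refl)
    fix j i assume "j \<in> {1..n}" "i \<in> {1..n}"
    then have "P (Y, i) (X, j) x = - P (X, j) (Y, i) x"
      using assms unfolding skew_on_def coords_def by blast
    then show "P (Y, i) (X, j) x * l ^ (n - i) * m ^ (n - j) = - (P (X, j) (Y, i) x * m ^ (n - j) * l ^ (n - i))"
      by simp
  qed
  also have "\<dots> = - genbr n P X Y x m l" unfolding genbr_def by (simp add: sum_negf)
  finally show ?thesis .
qed

lemma GSp_from_prim:
  assumes sk: "skew_on n P"
    and cover: "\<And>X Y. (X, Y) \<in> S \<or> (Y, X) \<in> S"
    and good: "\<And>X Y x l m. (X, Y) \<in> S \<Longrightarrow> l \<noteq> m \<Longrightarrow>
        genbr n P X Y x l m = psiv A B bb cc dd X Y (Ev n \<alpha> \<beta> \<gamma> \<delta> x l) (Ev n \<alpha> \<beta> \<gamma> \<delta> x m) l m"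
  shows "GSp n \<alpha> \<beta> \<gamma> \<delta> P A B bb cc dd"
  unfolding GSp_def
proof (intro allI impI)
  fix X Y x l m assume lm: "(l::complex) \<noteq> m"
  show "genbr n P X Y x l m = psiv A B bb cc dd X Y (Ev n \<alpha> \<beta> \<gamma> \<delta> x l) (Ev n \<alpha> \<beta> \<gamma> \<delta> x m) l m"
  proof (cases "(X, Y) \<in> S")
    case True then show ?thesis using good lm by blast
  next
    case False
    then have YX: "(Y, X) \<in> S" using cover by blast
    have ml: "m - l \<noteq> 0" "l - m \<noteq> 0" using lm by auto
    have "genbr n P X Y x l m = - genbr n P Y X x m l" by (rule genbr_skew[OF sk])
    also have "\<dots> = - psiv A B bb cc dd Y X (Ev n \<alpha> \<beta> \<gamma> \<delta> x m) (Ev n \<alpha> \<beta> \<gamma> \<delta> x l) m l"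
      using good[OF YX, of m l x] lm by simp
    also have "\<dots> = psiv A B bb cc dd X Y (Ev n \<alpha> \<beta> \<gamma> \<delta> x l) (Ev n \<alpha> \<beta> \<gamma> \<delta> x m) l m"
      unfolding psiv_def npsi_skew[of A B bb cc dd Y X "Ev n \<alpha> \<beta> \<gamma> \<delta> x m" "Ev n \<alpha> \<beta> \<gamma> \<delta> x l" m l]
      using ml by (simp add: field_simps)
    finally show ?thesis .
  qed
qed

definition S0 :: "(ent \<times> ent) set" where
  "S0 = {(EA,EA),(EB,EB),(EC,EC),(ED,ED),(EB,EA),(EC,EA),(EB,EC),(EB,ED),(EC,ED),(EA,ED)}"

lemma S0_cover: "(X, Y) \<in> S0 \<or> (Y, X) \<in> S0"
  by (induct X; induct Y) (simp_all add: S0_def)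

lemma spec0:
  assumes "sklyanin0 n \<eta> \<alpha> \<beta> \<gamma> \<delta> P"
  shows "GSp n \<alpha> \<beta> \<gamma> \<delta> P \<eta> 0 0 0 0"
proof (rule GSp_from_prim[OF _ S0_cover])
  show "skew_on n P" using assms unfolding sklyanin0_def by blast
next
  fix X Y x l m assume XY: "(X, Y) \<in> S0" and lm: "(l::complex) \<noteq> m"
  have lm': "l - m \<noteq> 0" using lm by simp
  have H: "let A = entry n \<alpha> EA x; B = entry n \<beta> EB x; C = entry n \<gamma> EC x; D = entry n \<delta> ED x;
           G = genbr n P
       in G EA EA x l m = 0 \<and> G EB EB x l m = 0 \<and> G EC EC x l m = 0 \<and> G ED ED x l m = 0 \<and>
          G EB EA x l m = \<eta> / (l - m) * (B l * A m - B m * A l) \<and>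
          G EC EA x l m = - \<eta> / (l - m) * (C l * A m - C m * A l) \<and>
          G EB EC x l m = \<eta> / (l - m) * (D l * A m - D m * A l) \<and>
          G EB ED x l m = - \<eta> / (l - m) * (B l * D m - B m * D l) \<and>
          G EC ED x l m = \<eta> / (l - m) * (C l * D m - C m * D l) \<and>
          G EA ED x l m = \<eta> / (l - m) * (C l * B m - C m * B l)"
    using assms lm unfolding sklyanin0_def by blast
  show "genbr n P X Y x l m = psiv \<eta> 0 0 0 0 X Y (Ev n \<alpha> \<beta> \<gamma> \<delta> x l) (Ev n \<alpha> \<beta> \<gamma> \<delta> x m) l m"
    using XY lm' unfolding S0_def
    by (auto simp: H[unfolded Let_def] psiv_def npsi_def npsi0_def field_simps)
qed

definition S1 :: "(ent \<times> ent) set" where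
  "S1 = {(EA,EA),(EB,EB),(EC,EC),(ED,ED),(EB,EA),(EC,EA),(EB,EC),(EB,ED),(EC,ED),(EA,ED)}"

lemma spec1:
  assumes "bracket1 n \<eta> \<alpha> \<beta> \<gamma> \<delta> P" and al: "\<alpha> \<noteq> 0"
  shows "GSp n \<alpha> \<beta> \<gamma> \<delta> P 0 \<eta> (\<beta> / \<alpha>) (\<gamma> / \<alpha>) (\<delta> / \<alpha>)"
proof (rule GSp_from_prim[OF _ S0_cover])
  show "skew_on n P" using assms unfolding bracket1_def by blast
next
  fix X Y x l m assume XY: "(X, Y) \<in> S0" and lm: "(l::complex) \<noteq> m"
  have lm': "l - m \<noteq> 0" using lm by simp
  have H: "let A = entry n \<alpha> EA x; B = entry n \<beta> EB x; C = entry n \<gamma> EC x; D = entry n \<delta> ED x;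
           G = genbr n P
       in G EA EA x l m = 0 \<and> G EB EB x l m = 0 \<and> G EC EC x l m = 0 \<and>
          G EB EA x l m = \<eta> / (l - m) * (l * B l * A m - m * B m * A l)
                          - \<eta> * \<beta> / \<alpha> * A l * A m \<and>
          G EC EA x l m = - \<eta> / (l - m) * (l * C l * A m - m * C m * A l)
                          + \<eta> * \<gamma> / \<alpha> * A l * A m \<and>
          G EB EC x l m = \<eta> / (l - m) * (l * D l * A m - m * D m * A l)
                          - \<eta> * \<delta> / \<alpha> * A l * A m \<and>
          G EB ED x l m = - \<eta> * l / (l - m) * (B l * D m - B m * D l)
                          + \<eta> * A l * (\<beta> / \<alpha> * D m - \<delta> / \<alpha> * B m) \<and>
          G EC ED x l m = \<eta> * l / (l - m) * (C l * D m - C m * D l)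
                          - \<eta> * A l * (\<gamma> / \<alpha> * D m - \<delta> / \<alpha> * C m) \<and>
          G EA ED x l m = \<eta> * l / (l - m) * (C l * B m - C m * B l)
                          - \<eta> * A l * (\<gamma> / \<alpha> * B m - \<beta> / \<alpha> * C m) \<and>
          G ED ED x l m = \<eta> * \<gamma> / \<alpha> * (D l * B m - D m * B l)
                          - \<eta> * \<beta> / \<alpha> * (D l * C m - D m * C l)
                          + \<eta> * \<delta> / \<alpha> * (B l * C m - B m * C l)"
    using assms lm unfolding bracket1_def by blast
  show "genbr n P X Y x l m = psiv 0 \<eta> (\<beta> / \<alpha>) (\<gamma> / \<alpha>) (\<delta> / \<alpha>) X Y (Ev n \<alpha> \<beta> \<gamma> \<delta> x l) (Ev n \<alpha> \<beta> \<gamma> \<delta> x m) l m"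
    using XY lm' al unfolding S0_def
    by (auto simp: H[unfolded Let_def] psiv_def npsi_def npsi1_def field_simps)
qed

lemma genbr_lin: "genbr n (\<lambda>v w x. a * P0 v w x + b * P1 v w x) X Y x l m = a * genbr n P0 X Y x l m + b * genbr n P1 X Y x l m"
  unfolding genbr_def by (simp add: sum.distrib sum_distrib_left algebra_simps)

lemma GSp_comb:
  assumes "GSp n \<alpha> \<beta> \<gamma> \<delta> P0 \<eta> 0 0 0 0" "GSp n \<alpha> \<beta> \<gamma> \<delta> P1 0 \<eta> bb cc dd"
  shows "GSp n \<alpha> \<beta> \<gamma> \<delta> (\<lambda>v w x. a * P0 v w x + b * P1 v w x) (a * \<eta>) (b * \<eta>) bb cc dd"
  using assms unfolding GSp_def genbr_lin psiv_def npsi_def by (simp add: algebra_simps add_divide_distrib)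

lemma pd_mult_const: "f \<in> polyfun n \<Longrightarrow> pd z (\<lambda>x. f x * c) = (\<lambda>x. pd z f x * c)"
  using pd_mult[of f n "\<lambda>x. c" z] by (simp add: polyfun.pf_const)

lemma npsi_div_l: "npsi A B bb cc dd X Y (\<lambda>e. L e / c) M l m = npsi A B bb cc dd X Y L M l m / c"
  using npsi_scale_l[of A B bb cc dd X Y "inverse c" L M l m] by (simp add: divide_inverse mult.commute)

lemma npsi_div_r: "npsi A B bb cc dd X Y L (\<lambda>e. M e / c) l m = npsi A B bb cc dd X Y L M l m / c"
  using npsi_scale_r[of A B bb cc dd X Y L "inverse c" M l m] by (simp add: divide_inverse mult.commute)

lemma frac_helper: "(b::complex) \<noteq> 0 \<Longrightarrow> d \<noteq> 0 \<Longrightarrow> a * d = c * b \<Longrightarrow> a / b = c / d"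
  by (simp add: frac_eq_eq)

lemma frac6:
  fixes l m p :: complex
  assumes "l \<noteq> m" "m \<noteq> p" "l \<noteq> p"
  shows "(N1a / (l - m) / (m - p) + N1b / (l - p) / (m - p))
       + (N2a / (m - p) / (p - l) + N2b / (m - l) / (p - l))
       + (N3a / (p - l) / (l - m) + N3b / (p - m) / (l - m))
     = (N1a * (p - l) - N1b * (l - m) + N2a * (l - m) - N2b * (m - p) + N3a * (m - p) - N3b * (p - l))
        / ((l - m) * (m - p) * (p - l))"
proof -
  have d: "l - m \<noteq> 0" "m - p \<noteq> 0" "p - l \<noteq> 0" "l - p \<noteq> 0" "m - l \<noteq> 0" "p - m \<noteq> 0" using assms by auto
  define D where "D = (l - m) * (m - p) * (p - l)"
  have D: "D \<noteq> 0" using d by (simp add: D_def)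
  have e1: "N1a / (l - m) / (m - p) = N1a * (p - l) / D"
    unfolding divide_divide_eq_left
  proof (rule frac_helper)
    show "(l - m) * (m - p) \<noteq> 0" using d by simp
    show "D \<noteq> 0" by (rule D)
    show "N1a * D = N1a * (p - l) * ((l - m) * (m - p))" unfolding D_def by algebra
  qed
  have e2: "N1b / (l - p) / (m - p) = - (N1b * (l - m)) / D"
    unfolding divide_divide_eq_left
  proof (rule frac_helper)
    show "(l - p) * (m - p) \<noteq> 0" using d by simp
    show "D \<noteq> 0" by (rule D)
    show "N1b * D = - (N1b * (l - m)) * ((l - p) * (m - p))" unfolding D_def by algebra
  qed
  have e3: "N2a / (m - p) / (p - l) = N2a * (l - m) / D"
    unfolding divide_divide_eq_left
  proof (rule frac_helper)
    show "(m - p) * (p - l) \<noteq> 0" using d by simp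
    show "D \<noteq> 0" by (rule D)
    show "N2a * D = N2a * (l - m) * ((m - p) * (p - l))" unfolding D_def by algebra
  qed
  have e4: "N2b / (m - l) / (p - l) = - (N2b * (m - p)) / D"
    unfolding divide_divide_eq_left
  proof (rule frac_helper)
    show "(m - l) * (p - l) \<noteq> 0" using d by simp
    show "D \<noteq> 0" by (rule D)
    show "N2b * D = - (N2b * (m - p)) * ((m - l) * (p - l))" unfolding D_def by algebra
  qed
  have e5: "N3a / (p - l) / (l - m) = N3a * (m - p) / D"
    unfolding divide_divide_eq_left
  proof (rule frac_helper)
    show "(p - l) * (l - m) \<noteq> 0" using d by simp
    show "D \<noteq> 0" by (rule D)
    show "N3a * D = N3a * (m - p) * ((p - l) * (l - m))" unfolding D_def by algebra
  qed
  have e6: "N3b / (p - m) / (l - m) = - (N3b * (p - l)) / D"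
    unfolding divide_divide_eq_left
  proof (rule frac_helper)
    show "(p - m) * (l - m) \<noteq> 0" using d by simp
    show "D \<noteq> 0" by (rule D)
    show "N3b * D = - (N3b * (p - l)) * ((p - m) * (l - m))" unfolding D_def by algebra
  qed
  show ?thesis unfolding e1 e2 e3 e4 e5 e6 D_def[symmetric]
    by (simp add: add_divide_distrib[symmetric] diff_divide_distrib[symmetric])
qed

lemma jac_psiv:
  fixes l m p :: complex
  assumes "l \<noteq> m" "m \<noteq> p" "l \<noteq> p"
  shows "(psiv A B bb cc dd Y Z (\<lambda>e. psiv A B bb cc dd X e El Em l m) Ep m p + psiv A B bb cc dd Y Z Em (\<lambda>e. psiv A B bb cc dd X e El Ep l p) m p)
   + (psiv A B bb cc dd Z X (\<lambda>e. psiv A B bb cc dd Y e Em Ep m p) El p l + psiv A B bb cc dd Z X Ep (\<lambda>e. psiv A B bb cc dd Y e Em El m l) p l)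
   + (psiv A B bb cc dd X Y (\<lambda>e. psiv A B bb cc dd Z e Ep El p l) Em l m + psiv A B bb cc dd X Y El (\<lambda>e. psiv A B bb cc dd Z e Ep Em p m) l m) = 0"
  unfolding psiv_def npsi_div_l npsi_div_r frac6[OF assms]
  using jacN_zero[of A B bb cc dd X Y Z El Em Ep l m p] unfolding jacN_def by simp

lemma psiv_quad:
  "psiv A B bb cc dd Y Z (\<lambda>e. L e + t * dL e) (\<lambda>e. M e + t * dM e) m p =
   psiv A B bb cc dd Y Z L M m p + t * (psiv A B bb cc dd Y Z dL M m p + psiv A B bb cc dd Y Z L dM m p)
   + t ^ 2 * psiv A B bb cc dd Y Z dL dM m p"
  unfolding psiv_def npsi_add_l npsi_add_r npsi_scale_l npsi_scale_r
  by (simp add: algebra_simps add_divide_distrib power2_eq_square)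

lemma quad_deriv: "((\<lambda>t. K0 + t * K1 + t ^ 2 * K2) has_field_derivative K1) (at (0::complex))"
  by (auto intro!: derivative_eq_intros)

lemma entry_shift: "entry n c e (\<lambda>z. x z + t * w z) m = entry n c e x m + t * (\<Sum>r=1..n. w (e, r) * m ^ (n - r))"
  unfolding entry_def by (simp add: algebra_simps sum.distrib sum_distrib_left)

lemma Ev_shift: "Ev n \<alpha> \<beta> \<gamma> \<delta> (\<lambda>z. x z + t * w z) m = (\<lambda>e. Ev n \<alpha> \<beta> \<gamma> \<delta> x m e + t * (\<Sum>r=1..n. w (e, r) * m ^ (n - r)))"
  unfolding Ev_def entry_shift by simp

lemma sum4_rearr: "(\<Sum>z\<in>Zs. (\<Sum>i\<in>I. a z i) * (\<Sum>j\<in>J. \<Sum>k\<in>K. (b z j k :: complex))) = (\<Sum>i\<in>I. \<Sum>j\<in>J. \<Sum>k\<in>K. \<Sum>z\<in>Zs. a z i * b z j k)"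
proof -
  have "(\<Sum>z\<in>Zs. (\<Sum>i\<in>I. a z i) * (\<Sum>j\<in>J. \<Sum>k\<in>K. b z j k)) = (\<Sum>z\<in>Zs. \<Sum>i\<in>I. \<Sum>j\<in>J. \<Sum>k\<in>K. a z i * b z j k)"
    unfolding sum_product by (simp add: sum_distrib_left)
  also have "\<dots> = (\<Sum>i\<in>I. \<Sum>z\<in>Zs. \<Sum>j\<in>J. \<Sum>k\<in>K. a z i * b z j k)" by (rule sum.swap)
  also have "\<dots> = (\<Sum>i\<in>I. \<Sum>j\<in>J. \<Sum>k\<in>K. \<Sum>z\<in>Zs. a z i * b z j k)" by (rule sum.cong[OF refl], rule swap3)
  finally show ?thesis .
qed

locale gsctx =
  fixes n :: nat and \<alpha> \<beta> \<gamma> \<delta> :: complex and P :: "ent \<times> nat \<Rightarrow> ent \<times> nat \<Rightarrow> pt \<Rightarrow> complex"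
    and A B bb cc dd :: complex
  assumes Ppf: "\<And>v w. v \<in> coords n \<Longrightarrow> w \<in> coords n \<Longrightarrow> P v w \<in> polyfun n"
  and Pskew: "skew_on n P"
  and GS: "GSp n \<alpha> \<beta> \<gamma> \<delta> P A B bb cc dd"
begin

abbreviation "E \<equiv> Ev n \<alpha> \<beta> \<gamma> \<delta>"
abbreviation "ps \<equiv> psiv A B bb cc dd"

lemma GS': "l \<noteq> m \<Longrightarrow> genbr n P X Y x l m = ps X Y (E x l) (E x m) l m"
  using GS unfolding GSp_def by blast

lemma inner_pf: "j \<in> {1..n} \<Longrightarrow> k \<in> {1..n} \<Longrightarrow> P (Y, j) (Z, k) \<in> polyfun n"
  by (rule Ppf) (auto simp: coords_def)

lemma genbr_pf: "(\<lambda>x. genbr n P Y Z x m p) \<in> polyfun n"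
  unfolding genbr_def
  by (intro pf_sum polyfun.pf_mult inner_pf polyfun.pf_const) auto

lemma pd_genbr: "pd z (\<lambda>x. genbr n P Y Z x m p) x =
   (\<Sum>j=1..n. \<Sum>k=1..n. pd z (P (Y, j) (Z, k)) x * m ^ (n - j) * p ^ (n - k))"
proof -
  have "pd z (\<lambda>x. genbr n P Y Z x m p) = pd z (\<lambda>x. \<Sum>j=1..n. (\<lambda>j x. \<Sum>k=1..n. P (Y, j) (Z, k) x * m ^ (n - j) * p ^ (n - k)) j x)"
    unfolding genbr_def by simp
  also have "\<dots> = (\<lambda>x. \<Sum>j=1..n. pd z (\<lambda>x. \<Sum>k=1..n. P (Y, j) (Z, k) x * m ^ (n - j) * p ^ (n - k)) x)"
    by (rule pd_sum) (auto intro!: pf_sum polyfun.pf_mult inner_pf polyfun.pf_const)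
  also have "\<dots> = (\<lambda>x. \<Sum>j=1..n. \<Sum>k=1..n. pd z (P (Y, j) (Z, k)) x * m ^ (n - j) * p ^ (n - k))"
  proof (rule ext, rule sum.cong[OF refl])
    fix x j assume j: "j \<in> {1..n}"
    have "pd z (\<lambda>x. \<Sum>k=1..n. (\<lambda>k x. P (Y, j) (Z, k) x * m ^ (n - j) * p ^ (n - k)) k x) = 
       (\<lambda>x. \<Sum>k=1..n. pd z (\<lambda>x. P (Y, j) (Z, k) x * m ^ (n - j) * p ^ (n - k)) x)"
      by (rule pd_sum) (auto intro!: polyfun.pf_mult inner_pf polyfun.pf_const j)
    also have "\<dots> = (\<lambda>x. \<Sum>k=1..n. pd z (P (Y, j) (Z, k)) x * m ^ (n - j) * p ^ (n - k))"
    proof (rule ext, rule sum.cong[OF refl])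
      fix x k assume k: "k \<in> {1..n}"
      have pf: "P (Y, j) (Z, k) \<in> polyfun n" using j k by (rule inner_pf)
      have pf2: "(\<lambda>x. P (Y, j) (Z, k) x * m ^ (n - j)) \<in> polyfun n" using pf by (intro polyfun.pf_mult polyfun.pf_const)
      show "pd z (\<lambda>x. P (Y, j) (Z, k) x * m ^ (n - j) * p ^ (n - k)) x = pd z (P (Y, j) (Z, k)) x * m ^ (n - j) * p ^ (n - k)"
        using pd_mult_const[OF pf2, of z "p ^ (n - k)"] pd_mult_const[OF pf, of z "m ^ (n - j)"] by simp
    qed
    finally show "pd z (\<lambda>x. \<Sum>k=1..n. P (Y, j) (Z, k) x * m ^ (n - j) * p ^ (n - k)) x =
        (\<Sum>k=1..n. pd z (P (Y, j) (Z, k)) x * m ^ (n - j) * p ^ (n - k))" by simp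
  qed
  finally show ?thesis by simp
qed

lemma TL:
  fixes l m p :: complex
  assumes lm: "l \<noteq> m" and mp: "m \<noteq> p" and lp: "l \<noteq> p"
  shows "(\<Sum>i=1..n. \<Sum>j=1..n. \<Sum>k=1..n. (\<Sum>z\<in>coords n. P (X, i) z x * pd z (P (Y, j) (Z, k)) x) * l ^ (n - i) * m ^ (n - j) * p ^ (n - k))
     = ps Y Z (\<lambda>e. ps X e (E x l) (E x m) l m) (E x p) m p + ps Y Z (E x m) (\<lambda>e. ps X e (E x l) (E x p) l p) m p"
proof -
  define c where "c z = (\<Sum>i=1..n. P (X, i) z x * l ^ (n - i))" for z
  define G where "G = (\<lambda>x. genbr n P Y Z x m p)"
  have step1: "(\<Sum>i=1..n. \<Sum>j=1..n. \<Sum>k=1..n. (\<Sum>z\<in>coords n. P (X, i) z x * pd z (P (Y, j) (Z, k)) x) * l ^ (n - i) * m ^ (n - j) * p ^ (n - k))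
      = (\<Sum>z\<in>coords n. c z * pd z G x)"
    unfolding c_def G_def pd_genbr sum4_rearr by (simp add: sum_distrib_right sum_distrib_left mult_ac)
  have step2: "((\<lambda>t. G (\<lambda>z. x z + t * c z)) has_field_derivative (\<Sum>z\<in>coords n. c z * pd z G x)) (at 0)"
    using pf_chain[OF genbr_pf[of Y Z m p], of x c 0] unfolding G_def by simp
  have dsum: "(\<Sum>r=1..n. c (e, r) * q ^ (n - r)) = genbr n P X e x l q" for e q
    unfolding c_def genbr_def sum_distrib_right by (subst sum.swap) (simp add: mult_ac)
  define K0 where "K0 = ps Y Z (E x m) (E x p) m p"
  define K1 where "K1 = ps Y Z (\<lambda>e. ps X e (E x l) (E x m) l m) (E x p) m p + ps Y Z (E x m) (\<lambda>e. ps X e (E x l) (E x p) l p) m p"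
  define K2 where "K2 = ps Y Z (\<lambda>e. ps X e (E x l) (E x m) l m) (\<lambda>e. ps X e (E x l) (E x p) l p) m p"
  have step3: "G (\<lambda>z. x z + t * c z) = K0 + t * K1 + t ^ 2 * K2" for t
  proof -
    have "G (\<lambda>z. x z + t * c z) = ps Y Z (E (\<lambda>z. x z + t * c z) m) (E (\<lambda>z. x z + t * c z) p) m p"
      unfolding G_def using GS'[OF mp] by simp
    also have "E (\<lambda>z. x z + t * c z) m = (\<lambda>e. E x m e + t * ps X e (E x l) (E x m) l m)"
      unfolding Ev_shift dsum using GS'[OF lm] by simp
    also have "E (\<lambda>z. x z + t * c z) p = (\<lambda>e. E x p e + t * ps X e (E x l) (E x p) l p)"
      unfolding Ev_shift dsum using GS'[OF lp] by simp
    finally show ?thesis unfolding psiv_quad K0_def K1_def K2_def .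
  qed
  have "((\<lambda>t. G (\<lambda>z. x z + t * c z)) has_field_derivative K1) (at 0)"
    unfolding step3 by (rule quad_deriv)
  then have "(\<Sum>z\<in>coords n. c z * pd z G x) = K1" using step2 DERIV_unique by blast
  then show ?thesis using step1 K1_def by simp
qed

lemma JC:
  assumes u: "u \<in> coords n" and v: "v \<in> coords n" and w: "w \<in> coords n"
  shows "(\<Sum>z\<in>coords n. P u z x * pd z (P v w) x + P v z x * pd z (P w u) x + P w z x * pd z (P u v) x) = 0"
proof -
  obtain X i where ui: "u = (X, i)" "i \<in> {1..n}" using u by (auto simp: coords_def)
  obtain Y j where vj: "v = (Y, j)" "j \<in> {1..n}" using v by (auto simp: coords_def)
  obtain Z k where wk: "w = (Z, k)" "k \<in> {1..n}" using w by (auto simp: coords_def)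
  define S where "S i j k = (\<Sum>z\<in>coords n. P (X, i) z x * pd z (P (Y, j) (Z, k)) x + P (Y, j) z x * pd z (P (Z, k) (X, i)) x + P (Z, k) z x * pd z (P (X, i) (Y, j)) x)" for i j k
  have "S i j k = 0"
  proof (rule coef3[where n=n and S=S])
    fix l m p :: complex assume lm: "l \<noteq> m" and mp: "m \<noteq> p" and lp: "l \<noteq> p"
    have T1: "(\<Sum>i=1..n. \<Sum>j=1..n. \<Sum>k=1..n. (\<Sum>z\<in>coords n. P (X, i) z x * pd z (P (Y, j) (Z, k)) x) * l ^ (n - i) * m ^ (n - j) * p ^ (n - k))
      = ps Y Z (\<lambda>e. ps X e (E x l) (E x m) l m) (E x p) m p + ps Y Z (E x m) (\<lambda>e. ps X e (E x l) (E x p) l p) m p"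
      by (rule TL[OF lm mp lp])
    have T2: "(\<Sum>i=1..n. \<Sum>j=1..n. \<Sum>k=1..n. (\<Sum>z\<in>coords n. P (Y, j) z x * pd z (P (Z, k) (X, i)) x) * l ^ (n - i) * m ^ (n - j) * p ^ (n - k))
      = ps Z X (\<lambda>e. ps Y e (E x m) (E x p) m p) (E x l) p l + ps Z X (E x p) (\<lambda>e. ps Y e (E x m) (E x l) m l) p l"
    proof -
      have "(\<Sum>i=1..n. \<Sum>j=1..n. \<Sum>k=1..n. (\<Sum>z\<in>coords n. P (Y, j) z x * pd z (P (Z, k) (X, i)) x) * l ^ (n - i) * m ^ (n - j) * p ^ (n - k))
        = (\<Sum>j=1..n. \<Sum>k=1..n. \<Sum>i=1..n. (\<Sum>z\<in>coords n. P (Y, j) z x * pd z (P (Z, k) (X, i)) x) * m ^ (n - j) * p ^ (n - k) * l ^ (n - i))"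
        by (subst swap3) (simp add: mult_ac)
      also have "\<dots> = ps Z X (\<lambda>e. ps Y e (E x m) (E x p) m p) (E x l) p l + ps Z X (E x p) (\<lambda>e. ps Y e (E x m) (E x l) m l) p l"
        by (rule TL) (use lm mp lp in auto)
      finally show ?thesis .
    qed
    have T3: "(\<Sum>i=1..n. \<Sum>j=1..n. \<Sum>k=1..n. (\<Sum>z\<in>coords n. P (Z, k) z x * pd z (P (X, i) (Y, j)) x) * l ^ (n - i) * m ^ (n - j) * p ^ (n - k))
      = ps X Y (\<lambda>e. ps Z e (E x p) (E x l) p l) (E x m) l m + ps X Y (E x l) (\<lambda>e. ps Z e (E x p) (E x m) p m) l m"
    proof -
      have "(\<Sum>i=1..n. \<Sum>j=1..n. \<Sum>k=1..n. (\<Sum>z\<in>coords n. P (Z, k) z x * pd z (P (X, i) (Y, j)) x) * l ^ (n - i) * m ^ (n - j) * p ^ (n - k))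
        = (\<Sum>k=1..n. \<Sum>i=1..n. \<Sum>j=1..n. (\<Sum>z\<in>coords n. P (Z, k) z x * pd z (P (X, i) (Y, j)) x) * p ^ (n - k) * l ^ (n - i) * m ^ (n - j))"
        by (subst swap3, subst swap3) (simp add: mult_ac)
      also have "\<dots> = ps X Y (\<lambda>e. ps Z e (E x p) (E x l) p l) (E x m) l m + ps X Y (E x l) (\<lambda>e. ps Z e (E x p) (E x m) p m) l m"
        by (rule TL) (use lm mp lp in auto)
      finally show ?thesis .
    qed
    have "(\<Sum>i=1..n. \<Sum>j=1..n. \<Sum>k=1..n. S i j k * l ^ (n - i) * m ^ (n - j) * p ^ (n - k))
      = (\<Sum>i=1..n. \<Sum>j=1..n. \<Sum>k=1..n. (\<Sum>z\<in>coords n. P (X, i) z x * pd z (P (Y, j) (Z, k)) x) * l ^ (n - i) * m ^ (n - j) * p ^ (n - k))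
      + (\<Sum>i=1..n. \<Sum>j=1..n. \<Sum>k=1..n. (\<Sum>z\<in>coords n. P (Y, j) z x * pd z (P (Z, k) (X, i)) x) * l ^ (n - i) * m ^ (n - j) * p ^ (n - k))
      + (\<Sum>i=1..n. \<Sum>j=1..n. \<Sum>k=1..n. (\<Sum>z\<in>coords n. P (Z, k) z x * pd z (P (X, i) (Y, j)) x) * l ^ (n - i) * m ^ (n - j) * p ^ (n - k))"
      unfolding S_def by (simp add: sum.distrib algebra_simps)
    also have "\<dots> = 0" unfolding T1 T2 T3 using jac_psiv[OF lm mp lp] by simp
    finally show "(\<Sum>i=1..n. \<Sum>j=1..n. \<Sum>k=1..n. S i j k * l ^ (n - i) * m ^ (n - j) * p ^ (n - k)) = 0" .
  qed (use ui vj wk in auto)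
  then show ?thesis using ui vj wk S_def by simp
qed

lemma poisson_gs: "is_poisson n P"
proof -
  interpret bra n P by unfold_locales (use Ppf Pskew in auto)
  show ?thesis by (rule poisson) (rule JC)
qed

end

lemma entry_sum: "entry n c e x l = (\<Sum>a\<le>n. cf n c e x a * l ^ a)"
  by (rule entry_cf)

lemma RED:
  fixes c :: "nat \<Rightarrow> nat \<Rightarrow> complex"
  assumes "\<And>p q. p \<le> n \<Longrightarrow> q \<le> n \<Longrightarrow> p = n \<or> q = n \<Longrightarrow> c p q = 0"
  shows "(\<Sum>p<n. \<Sum>q<n. c p q * l ^ p * m ^ q) = (\<Sum>p\<le>n. \<Sum>q\<le>n. c p q * l ^ p * m ^ q)"
proof -
  have z1: "(\<Sum>q\<le>n. c n q * l ^ n * m ^ q) = 0"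
    by (intro sum.neutral ballI) (simp add: assms)
  have z2: "(\<Sum>q\<le>n. c p q * l ^ p * m ^ q) = (\<Sum>q<n. c p q * l ^ p * m ^ q)" if "p < n" for p
  proof -
    have "(\<Sum>q\<le>n. c p q * l ^ p * m ^ q) = (\<Sum>q<Suc n. c p q * l ^ p * m ^ q)"
      by (simp only: lessThan_Suc_atMost)
    also have "\<dots> = (\<Sum>q<n. c p q * l ^ p * m ^ q) + c p n * l ^ p * m ^ n" by (rule sum.lessThan_Suc)
    also have "c p n = 0" using that by (intro assms) auto
    finally show ?thesis by simp
  qed
  have "(\<Sum>p\<le>n. \<Sum>q\<le>n. c p q * l ^ p * m ^ q) = (\<Sum>p<Suc n. \<Sum>q\<le>n. c p q * l ^ p * m ^ q)"
    by (simp only: lessThan_Suc_atMost)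
  also have "\<dots> = (\<Sum>p<n. \<Sum>q\<le>n. c p q * l ^ p * m ^ q) + (\<Sum>q\<le>n. c n q * l ^ n * m ^ q)" by (rule sum.lessThan_Suc)
  also have "\<dots> = (\<Sum>p<n. \<Sum>q<n. c p q * l ^ p * m ^ q)" unfolding z1 using z2 by simp
  finally show ?thesis by simp
qed

lemma PROD: "(\<Sum>p\<le>n. \<Sum>q\<le>n. u p * h q * l ^ p * m ^ q) = (\<Sum>p\<le>n. u p * l ^ p) * (\<Sum>q\<le>n. h q * (m::complex) ^ q)"
  unfolding sum_product by (simp add: mult_ac)

lemma PROD2: "(\<Sum>a\<le>n. f a * l ^ a) * (\<Sum>b\<le>n. g b * m ^ b) - (\<Sum>a\<le>n. f a * m ^ a) * (\<Sum>b\<le>n. g b * (l::complex) ^ b)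
  = (\<Sum>p\<le>n. \<Sum>q\<le>n. (f p * g q - f q * g p) * l ^ p * m ^ q)"
proof -
  have "(\<Sum>a\<le>n. f a * m ^ a) * (\<Sum>b\<le>n. g b * l ^ b) = (\<Sum>b\<le>n. \<Sum>a\<le>n. f a * m ^ a * (g b * l ^ b))"
    unfolding sum_product by (rule sum.swap)
  then show ?thesis
    by (simp add: sum_product sum_subtractf[symmetric] algebra_simps)
qed

lemma DDspec:
  assumes "l \<noteq> m"
  shows "(\<Sum>p<n. \<Sum>q<n. c * ddc n (cf n c1 e1 x) (cf n c2 e2 x) p q * l ^ p * m ^ q)
    = c / (l - m) * (entry n c1 e1 x l * entry n c2 e2 x m - entry n c1 e1 x m * entry n c2 e2 x l)"
proof -
  have lm: "l - m \<noteq> 0" using assms by simp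
  have "(\<Sum>p<n. \<Sum>q<n. c * ddc n (cf n c1 e1 x) (cf n c2 e2 x) p q * l ^ p * m ^ q)
      = c * (\<Sum>p<n. \<Sum>q<n. ddc n (cf n c1 e1 x) (cf n c2 e2 x) p q * l ^ p * m ^ q)"
    by (simp add: sum_distrib_left mult_ac)
  also have "(\<Sum>p<n. \<Sum>q<n. ddc n (cf n c1 e1 x) (cf n c2 e2 x) p q * l ^ p * m ^ q)
     = (entry n c1 e1 x l * entry n c2 e2 x m - entry n c1 e1 x m * entry n c2 e2 x l) / (l - m)"
    using DD[of l m n "cf n c1 e1 x" "cf n c2 e2 x"] lm unfolding entry_sum
    by (simp add: eq_divide_eq mult.commute)
  finally show ?thesis by simp
qed

definition gcoef :: "nat \<Rightarrow> complex \<Rightarrow> (nat \<Rightarrow> complex) \<Rightarrow> (nat \<Rightarrow> complex) \<Rightarrow> (nat \<Rightarrow> complex) \<Rightarrow> (nat \<Rightarrow> complex) \<Rightarrow> nat \<Rightarrow> nat \<Rightarrow> complex" where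
  "gcoef n s f g u h p q = s * (if 1 \<le> p then ddc n f g (p - 1) q else 0) + u p * h q"

lemma GEN:
  fixes f g u h :: "nat \<Rightarrow> complex" and l m s :: complex
  assumes lm: "l \<noteq> m" and n1: "1 \<le> n" and hn: "h n = 0"
    and top: "\<And>q. q < n \<Longrightarrow> s * (f n * g q - f q * g n) + u n * h q = 0"
  shows "(\<Sum>p<n. \<Sum>q<n. gcoef n s f g u h p q * l ^ p * m ^ q)
    = s * l / (l - m) * ((\<Sum>a\<le>n. f a * l ^ a) * (\<Sum>b\<le>n. g b * m ^ b) - (\<Sum>a\<le>n. f a * m ^ a) * (\<Sum>b\<le>n. g b * l ^ b))
      + (\<Sum>p\<le>n. u p * l ^ p) * (\<Sum>q\<le>n. h q * m ^ q)"
proof -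
  have lm': "l - m \<noteq> 0" using lm by simp
  have van: "gcoef n s f g u h p q = 0" if "p \<le> n" "q \<le> n" "p = n \<or> q = n" for p q
  proof (cases "q = n")
    case True then show ?thesis by (simp add: gcoef_def ddc_zero_q hn)
  next
    case False
    then have "p = n" "q < n" using that by auto
    then show ?thesis using ddc_top[OF n1, of q f g] top[of q] n1 by (simp add: gcoef_def)
  qed
  have "(\<Sum>p<n. \<Sum>q<n. gcoef n s f g u h p q * l ^ p * m ^ q) = (\<Sum>p\<le>n. \<Sum>q\<le>n. gcoef n s f g u h p q * l ^ p * m ^ q)"
    by (rule RED) (use van in auto)
  also have "\<dots> = s * (\<Sum>p\<le>n. \<Sum>q\<le>n. (if 1 \<le> p then ddc n f g (p - 1) q else 0) * l ^ p * m ^ q)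
      + (\<Sum>p\<le>n. \<Sum>q\<le>n. u p * h q * l ^ p * m ^ q)"
    unfolding gcoef_def by (simp add: sum.distrib sum_distrib_left algebra_simps)
  also have "(\<Sum>p\<le>n. \<Sum>q\<le>n. (if 1 \<le> p then ddc n f g (p - 1) q else 0) * l ^ p * m ^ q)
      = l * (\<Sum>p<n. \<Sum>q<n. ddc n f g p q * l ^ p * m ^ q)"
  proof -
    have "(\<Sum>p\<le>n. \<Sum>q\<le>n. (if 1 \<le> p then ddc n f g (p - 1) q else 0) * l ^ p * m ^ q)
        = (\<Sum>p<n. \<Sum>q\<le>n. ddc n f g p q * l ^ Suc p * m ^ q)"
      unfolding lessThan_Suc_atMost[symmetric] sum.lessThan_Suc_shift by simp
    also have "\<dots> = (\<Sum>p<n. \<Sum>q<n. ddc n f g p q * l ^ Suc p * m ^ q)"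
      by (rule sum.cong[OF refl]) (simp add: lessThan_Suc_atMost[symmetric] ddc_zero_q)
    also have "\<dots> = l * (\<Sum>p<n. \<Sum>q<n. ddc n f g p q * l ^ p * m ^ q)"
      by (simp add: sum_distrib_left mult_ac)
    finally show ?thesis .
  qed
  also have "(\<Sum>p<n. \<Sum>q<n. ddc n f g p q * l ^ p * m ^ q) =
     ((\<Sum>a\<le>n. f a * l ^ a) * (\<Sum>b\<le>n. g b * m ^ b) - (\<Sum>a\<le>n. f a * m ^ a) * (\<Sum>b\<le>n. g b * l ^ b)) / (l - m)"
    using DD[of l m n f g] lm' by (simp add: eq_divide_eq mult.commute)
  finally show ?thesis unfolding PROD by simp
qed

lemma GENspec:
  fixes l m :: complex
  assumes lm: "l \<noteq> m" and n1: "1 \<le> n" and hn: "k1 * c4 + k2 * c5 = 0"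
    and top: "\<And>q. q < n \<Longrightarrow> s * (c1 * cf n c2 e2 x q - cf n c1 e1 x q * c2) + c3 * (k1 * cf n c4 e4 x q + k2 * cf n c5 e5 x q) = 0"
  shows "(\<Sum>p<n. \<Sum>q<n. gcoef n s (cf n c1 e1 x) (cf n c2 e2 x) (cf n c3 e3 x) (\<lambda>q. k1 * cf n c4 e4 x q + k2 * cf n c5 e5 x q) p q * l ^ p * m ^ q)
    = s * l / (l - m) * (entry n c1 e1 x l * entry n c2 e2 x m - entry n c1 e1 x m * entry n c2 e2 x l)
      + entry n c3 e3 x l * (k1 * entry n c4 e4 x m + k2 * entry n c5 e5 x m)"
proof -
  have H: "(\<Sum>q\<le>n. (k1 * cf n c4 e4 x q + k2 * cf n c5 e5 x q) * m ^ q) = k1 * entry n c4 e4 x m + k2 * entry n c5 e5 x m"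
    unfolding entry_sum by (simp add: sum.distrib sum_distrib_left algebra_simps)
  show ?thesis
    using GEN[OF lm n1, of "\<lambda>q. k1 * cf n c4 e4 x q + k2 * cf n c5 e5 x q" s "cf n c1 e1 x" "cf n c2 e2 x" "cf n c3 e3 x"] hn top
    unfolding H entry_sum[symmetric] by simp
qed

definition tab :: "(ent \<Rightarrow> ent \<Rightarrow> pt \<Rightarrow> nat \<Rightarrow> nat \<Rightarrow> complex) \<Rightarrow> (ent \<times> ent) set \<Rightarrow> ent \<Rightarrow> ent \<Rightarrow> pt \<Rightarrow> nat \<Rightarrow> nat \<Rightarrow> complex" where
  "tab t S X Y x p q = (if (X, Y) \<in> S then t X Y x p q else if (Y, X) \<in> S then - t Y X x q p else 0)"

definition Qof :: "nat \<Rightarrow> (ent \<Rightarrow> ent \<Rightarrow> pt \<Rightarrow> nat \<Rightarrow> nat \<Rightarrow> complex) \<Rightarrow> (ent \<times> ent) set \<Rightarrow> ent \<times> nat \<Rightarrow> ent \<times> nat \<Rightarrow> pt \<Rightarrow> complex" where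
  "Qof n t S v w x = tab t S (fst v) (fst w) x (n - snd v) (n - snd w)"

lemma genbr_Qof: "genbr n (Qof n t S) X Y x l m = (\<Sum>p<n. \<Sum>q<n. tab t S X Y x p q * l ^ p * m ^ q)"
proof -
  have "genbr n (Qof n t S) X Y x l m = (\<Sum>i=1..n. \<Sum>j=1..n. tab t S X Y x (n - i) (n - j) * l ^ (n - i) * m ^ (n - j))"
    unfolding genbr_def Qof_def by simp
  also have "\<dots> = (\<Sum>p<n. \<Sum>j=1..n. tab t S X Y x p (n - j) * l ^ p * m ^ (n - j))"
    by (rule sum_rev_index[of "\<lambda>p. \<Sum>j=1..n. tab t S X Y x p (n - j) * l ^ p * m ^ (n - j)"])
  also have "\<dots> = (\<Sum>p<n. \<Sum>q<n. tab t S X Y x p q * l ^ p * m ^ q)"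
  proof (rule sum.cong[OF refl])
    fix p
    show "(\<Sum>j=1..n. tab t S X Y x p (n - j) * l ^ p * m ^ (n - j)) = (\<Sum>q<n. tab t S X Y x p q * l ^ p * m ^ q)"
      by (rule sum_rev_index[of "\<lambda>q. tab t S X Y x p q * l ^ p * m ^ q" n])
  qed
  finally show ?thesis .
qed

lemma tab_skew:
  assumes "\<And>X Y. (X, Y) \<in> S \<Longrightarrow> (Y, X) \<in> S \<Longrightarrow> X = Y"
    and "\<And>X x p q. (X, X) \<in> S \<Longrightarrow> t X X x q p = - t X X x p q"
  shows "tab t S Y X x q p = - tab t S X Y x p q"
proof (cases "(X, Y) \<in> S \<and> (Y, X) \<in> S")
  case True
  then have "X = Y" using assms(1) by blast
  then show ?thesis using True assms(2)[of X x p q] unfolding tab_def by simp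
next
  case False
  then show ?thesis unfolding tab_def by auto
qed

lemma Qof_skew:
  assumes "\<And>X Y x p q. tab t S Y X x q p = - tab t S X Y x p q"
  shows "skew_on n (Qof n t S)"
  unfolding skew_on_def Qof_def
proof (intro ballI allI)
  fix v w :: "ent \<times> nat" and x
  show "tab t S (fst w) (fst v) x (n - snd w) (n - snd v) = - tab t S (fst v) (fst w) x (n - snd v) (n - snd w)"
    by (rule assms)
qed

lemma Qof_pf:
  assumes "\<And>X Y p q. (\<lambda>x. t X Y x p q) \<in> polyfun n"
  shows "Qof n t S v w \<in> polyfun n"
proof -
  have "(\<lambda>x. tab t S X Y x p q) \<in> polyfun n" for X Y p q
    unfolding tab_def by (cases "(X, Y) \<in> S"; cases "(Y, X) \<in> S") (auto intro: pf_neg assms polyfun.pf_const)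
  then show ?thesis unfolding Qof_def by (simp add: eta_contract_eq)
qed

lemma GSp_unique:
  assumes "GSp n \<alpha> \<beta> \<gamma> \<delta> P A B bb cc dd" "GSp n \<alpha> \<beta> \<gamma> \<delta> Q A B bb cc dd" "v \<in> coords n" "w \<in> coords n"
  shows "P v w = Q v w"
proof
  fix x
  obtain X i where vi: "v = (X, i)" "i \<in> {1..n}" using assms(3) by (auto simp: coords_def)
  obtain Y j where wj: "w = (Y, j)" "j \<in> {1..n}" using assms(4) by (auto simp: coords_def)
  have "P (X, i) (Y, j) x - Q (X, i) (Y, j) x = 0"
  proof (rule coef2[where n=n and S="\<lambda>i j. P (X, i) (Y, j) x - Q (X, i) (Y, j) x"])
    fix l m :: complex assume "l \<noteq> m"
    then have "genbr n P X Y x l m = genbr n Q X Y x l m" using assms(1,2) unfolding GSp_def by simp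
    then show "(\<Sum>i=1..n. \<Sum>j=1..n. (P (X, i) (Y, j) x - Q (X, i) (Y, j) x) * l ^ (n - i) * m ^ (n - j)) = 0"
      unfolding genbr_def by (simp add: algebra_simps sum_subtractf)
  qed (use vi wj in auto)
  then show "P v w x = Q v w x" using vi wj by simp
qed

definition t0 :: "nat \<Rightarrow> complex \<Rightarrow> complex \<Rightarrow> complex \<Rightarrow> complex \<Rightarrow> complex \<Rightarrow> ent \<Rightarrow> ent \<Rightarrow> pt \<Rightarrow> nat \<Rightarrow> nat \<Rightarrow> complex" where
  "t0 n \<eta> \<alpha> \<beta> \<gamma> \<delta> X Y x p q = (case (X, Y) of
      (EB,EA) \<Rightarrow> \<eta> * ddc n (cf n \<beta> EB x) (cf n \<alpha> EA x) p q
    | (EC,EA) \<Rightarrow> - \<eta> * ddc n (cf n \<gamma> EC x) (cf n \<alpha> EA x) p q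
    | (EB,EC) \<Rightarrow> \<eta> * ddc n (cf n \<delta> ED x) (cf n \<alpha> EA x) p q
    | (EB,ED) \<Rightarrow> - \<eta> * ddc n (cf n \<beta> EB x) (cf n \<delta> ED x) p q
    | (EC,ED) \<Rightarrow> \<eta> * ddc n (cf n \<gamma> EC x) (cf n \<delta> ED x) p q
    | (EA,ED) \<Rightarrow> \<eta> * ddc n (cf n \<gamma> EC x) (cf n \<beta> EB x) p q
    | _ \<Rightarrow> 0)"

definition prim0 :: "(ent \<times> ent) set" where
  "prim0 = {(EB,EA),(EC,EA),(EB,EC),(EB,ED),(EC,ED),(EA,ED)}"

definition t1 :: "nat \<Rightarrow> complex \<Rightarrow> complex \<Rightarrow> complex \<Rightarrow> complex \<Rightarrow> complex \<Rightarrow> ent \<Rightarrow> ent \<Rightarrow> pt \<Rightarrow> nat \<Rightarrow> nat \<Rightarrow> complex" where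
  "t1 n \<eta> \<alpha> \<beta> \<gamma> \<delta> X Y x p q = (case (X, Y) of
      (EB,EA) \<Rightarrow> gcoef n \<eta> (cf n \<beta> EB x) (cf n \<alpha> EA x) (cf n \<alpha> EA x) (\<lambda>q. \<eta> * cf n \<beta> EB x q + - (\<eta> * \<beta> / \<alpha>) * cf n \<alpha> EA x q) p q
    | (EC,EA) \<Rightarrow> gcoef n (- \<eta>) (cf n \<gamma> EC x) (cf n \<alpha> EA x) (cf n \<alpha> EA x) (\<lambda>q. - \<eta> * cf n \<gamma> EC x q + \<eta> * \<gamma> / \<alpha> * cf n \<alpha> EA x q) p q
    | (EB,EC) \<Rightarrow> gcoef n \<eta> (cf n \<delta> ED x) (cf n \<alpha> EA x) (cf n \<alpha> EA x) (\<lambda>q. \<eta> * cf n \<delta> ED x q + - (\<eta> * \<delta> / \<alpha>) * cf n \<alpha> EA x q) p q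
    | (EB,ED) \<Rightarrow> gcoef n (- \<eta>) (cf n \<beta> EB x) (cf n \<delta> ED x) (cf n \<alpha> EA x) (\<lambda>q. \<eta> * \<beta> / \<alpha> * cf n \<delta> ED x q + - (\<eta> * \<delta> / \<alpha>) * cf n \<beta> EB x q) p q
    | (EC,ED) \<Rightarrow> gcoef n \<eta> (cf n \<gamma> EC x) (cf n \<delta> ED x) (cf n \<alpha> EA x) (\<lambda>q. - (\<eta> * \<gamma> / \<alpha>) * cf n \<delta> ED x q + \<eta> * \<delta> / \<alpha> * cf n \<gamma> EC x q) p q
    | (EA,ED) \<Rightarrow> gcoef n \<eta> (cf n \<gamma> EC x) (cf n \<beta> EB x) (cf n \<alpha> EA x) (\<lambda>q. - (\<eta> * \<gamma> / \<alpha>) * cf n \<beta> EB x q + \<eta> * \<beta> / \<alpha> * cf n \<gamma> EC x q) p q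
    | (ED,ED) \<Rightarrow> \<eta> * \<gamma> / \<alpha> * (cf n \<delta> ED x p * cf n \<beta> EB x q - cf n \<delta> ED x q * cf n \<beta> EB x p)
               - \<eta> * \<beta> / \<alpha> * (cf n \<delta> ED x p * cf n \<gamma> EC x q - cf n \<delta> ED x q * cf n \<gamma> EC x p)
               + \<eta> * \<delta> / \<alpha> * (cf n \<beta> EB x p * cf n \<gamma> EC x q - cf n \<beta> EB x q * cf n \<gamma> EC x p)
    | _ \<Rightarrow> 0)"

definition prim1 :: "(ent \<times> ent) set" where
  "prim1 = {(EB,EA),(EC,EA),(EB,EC),(EB,ED),(EC,ED),(EA,ED),(ED,ED)}"

lemma pf_gcoef: "(\<lambda>x. gcoef n s (cf n c1 e1 x) (cf n c2 e2 x) (cf n c3 e3 x) (\<lambda>q. k1 * cf n c4 e4 x q + k2 * cf n c5 e5 x q) p q) \<in> polyfun n"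
  unfolding gcoef_def
  by (cases "1 \<le> p") (auto intro!: polyfun.pf_add polyfun.pf_mult polyfun.pf_const pf_ddc pf_cf)

lemma t0_pf: "(\<lambda>x. t0 n \<eta> \<alpha> \<beta> \<gamma> \<delta> X Y x p q) \<in> polyfun n"
  by (induct X; induct Y; simp only: t0_def prod.case ent.case; intro polyfun.pf_mult polyfun.pf_const pf_ddc)

lemma t1_pf: "(\<lambda>x. t1 n \<eta> \<alpha> \<beta> \<gamma> \<delta> X Y x p q) \<in> polyfun n"
  by (induct X; induct Y; simp only: t1_def prod.case ent.case; intro pf_gcoef polyfun.pf_add polyfun.pf_mult polyfun.pf_const pf_diff pf_cf)

lemma tab0_skew: "tab (t0 n \<eta> \<alpha> \<beta> \<gamma> \<delta>) prim0 Y X x q p = - tab (t0 n \<eta> \<alpha> \<beta> \<gamma> \<delta>) prim0 X Y x p q"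
  by (rule tab_skew) (auto simp: prim0_def)

lemma tab1_skew: "tab (t1 n \<eta> \<alpha> \<beta> \<gamma> \<delta>) prim1 Y X x q p = - tab (t1 n \<eta> \<alpha> \<beta> \<gamma> \<delta>) prim1 X Y x p q"
  by (rule tab_skew) (auto simp: prim1_def t1_def algebra_simps)

abbreviation "Q0 n \<eta> \<alpha> \<beta> \<gamma> \<delta> \<equiv> Qof n (t0 n \<eta> \<alpha> \<beta> \<gamma> \<delta>) prim0"
abbreviation "Q1 n \<eta> \<alpha> \<beta> \<gamma> \<delta> \<equiv> Qof n (t1 n \<eta> \<alpha> \<beta> \<gamma> \<delta>) prim1"

lemma tab0_eval:
  "tab (t0 n \<eta> \<alpha> \<beta> \<gamma> \<delta>) prim0 EA EA x p q = 0"
  "tab (t0 n \<eta> \<alpha> \<beta> \<gamma> \<delta>) prim0 EB EB x p q = 0"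
  "tab (t0 n \<eta> \<alpha> \<beta> \<gamma> \<delta>) prim0 EC EC x p q = 0"
  "tab (t0 n \<eta> \<alpha> \<beta> \<gamma> \<delta>) prim0 ED ED x p q = 0"
  "tab (t0 n \<eta> \<alpha> \<beta> \<gamma> \<delta>) prim0 EB EA x p q = \<eta> * ddc n (cf n \<beta> EB x) (cf n \<alpha> EA x) p q"
  "tab (t0 n \<eta> \<alpha> \<beta> \<gamma> \<delta>) prim0 EC EA x p q = - \<eta> * ddc n (cf n \<gamma> EC x) (cf n \<alpha> EA x) p q"
  "tab (t0 n \<eta> \<alpha> \<beta> \<gamma> \<delta>) prim0 EB EC x p q = \<eta> * ddc n (cf n \<delta> ED x) (cf n \<alpha> EA x) p q"
  "tab (t0 n \<eta> \<alpha> \<beta> \<gamma> \<delta>) prim0 EB ED x p q = - \<eta> * ddc n (cf n \<beta> EB x) (cf n \<delta> ED x) p q"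
  "tab (t0 n \<eta> \<alpha> \<beta> \<gamma> \<delta>) prim0 EC ED x p q = \<eta> * ddc n (cf n \<gamma> EC x) (cf n \<delta> ED x) p q"
  "tab (t0 n \<eta> \<alpha> \<beta> \<gamma> \<delta>) prim0 EA ED x p q = \<eta> * ddc n (cf n \<gamma> EC x) (cf n \<beta> EB x) p q"
  by (simp_all add: tab_def prim0_def t0_def)

lemma Q0_sk: "sklyanin0 n \<eta> \<alpha> \<beta> \<gamma> \<delta> (Q0 n \<eta> \<alpha> \<beta> \<gamma> \<delta>)"
  unfolding sklyanin0_def Let_def
proof (intro conjI allI impI)
  show "skew_on n (Q0 n \<eta> \<alpha> \<beta> \<gamma> \<delta>)" by (rule Qof_skew) (rule tab0_skew)
next
  fix x :: pt and l m :: complex assume lm: "l \<noteq> m"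
  note G = genbr_Qof tab0_eval
  show "genbr n (Q0 n \<eta> \<alpha> \<beta> \<gamma> \<delta>) EA EA x l m = 0" by (simp add: G)
  show "genbr n (Q0 n \<eta> \<alpha> \<beta> \<gamma> \<delta>) EB EB x l m = 0" by (simp add: G)
  show "genbr n (Q0 n \<eta> \<alpha> \<beta> \<gamma> \<delta>) EC EC x l m = 0" by (simp add: G)
  show "genbr n (Q0 n \<eta> \<alpha> \<beta> \<gamma> \<delta>) ED ED x l m = 0" by (simp add: G)
  show "genbr n (Q0 n \<eta> \<alpha> \<beta> \<gamma> \<delta>) EB EA x l m = \<eta> / (l - m) * (entry n \<beta> EB x l * entry n \<alpha> EA x m - entry n \<beta> EB x m * entry n \<alpha> EA x l)"
    unfolding G by (rule DDspec[OF lm])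
  show "genbr n (Q0 n \<eta> \<alpha> \<beta> \<gamma> \<delta>) EC EA x l m = - \<eta> / (l - m) * (entry n \<gamma> EC x l * entry n \<alpha> EA x m - entry n \<gamma> EC x m * entry n \<alpha> EA x l)"
    unfolding G by (rule DDspec[OF lm])
  show "genbr n (Q0 n \<eta> \<alpha> \<beta> \<gamma> \<delta>) EB EC x l m = \<eta> / (l - m) * (entry n \<delta> ED x l * entry n \<alpha> EA x m - entry n \<delta> ED x m * entry n \<alpha> EA x l)"
    unfolding G by (rule DDspec[OF lm])
  show "genbr n (Q0 n \<eta> \<alpha> \<beta> \<gamma> \<delta>) EB ED x l m = - \<eta> / (l - m) * (entry n \<beta> EB x l * entry n \<delta> ED x m - entry n \<beta> EB x m * entry n \<delta> ED x l)"
    unfolding G by (rule DDspec[OF lm])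
  show "genbr n (Q0 n \<eta> \<alpha> \<beta> \<gamma> \<delta>) EC ED x l m = \<eta> / (l - m) * (entry n \<gamma> EC x l * entry n \<delta> ED x m - entry n \<gamma> EC x m * entry n \<delta> ED x l)"
    unfolding G by (rule DDspec[OF lm])
  show "genbr n (Q0 n \<eta> \<alpha> \<beta> \<gamma> \<delta>) EA ED x l m = \<eta> / (l - m) * (entry n \<gamma> EC x l * entry n \<beta> EB x m - entry n \<gamma> EC x m * entry n \<beta> EB x l)"
    unfolding G by (rule DDspec[OF lm])
qed

lemma tab1_eval:
  "tab (t1 n \<eta> \<alpha> \<beta> \<gamma> \<delta>) prim1 EA EA x p q = 0"
  "tab (t1 n \<eta> \<alpha> \<beta> \<gamma> \<delta>) prim1 EB EB x p q = 0"
  "tab (t1 n \<eta> \<alpha> \<beta> \<gamma> \<delta>) prim1 EC EC x p q = 0"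
  "tab (t1 n \<eta> \<alpha> \<beta> \<gamma> \<delta>) prim1 EB EA x p q = gcoef n \<eta> (cf n \<beta> EB x) (cf n \<alpha> EA x) (cf n \<alpha> EA x) (\<lambda>q. \<eta> * cf n \<beta> EB x q + - (\<eta> * \<beta> / \<alpha>) * cf n \<alpha> EA x q) p q"
  "tab (t1 n \<eta> \<alpha> \<beta> \<gamma> \<delta>) prim1 EC EA x p q = gcoef n (- \<eta>) (cf n \<gamma> EC x) (cf n \<alpha> EA x) (cf n \<alpha> EA x) (\<lambda>q. - \<eta> * cf n \<gamma> EC x q + \<eta> * \<gamma> / \<alpha> * cf n \<alpha> EA x q) p q"
  "tab (t1 n \<eta> \<alpha> \<beta> \<gamma> \<delta>) prim1 EB EC x p q = gcoef n \<eta> (cf n \<delta> ED x) (cf n \<alpha> EA x) (cf n \<alpha> EA x) (\<lambda>q. \<eta> * cf n \<delta> ED x q + - (\<eta> * \<delta> / \<alpha>) * cf n \<alpha> EA x q) p q"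
  "tab (t1 n \<eta> \<alpha> \<beta> \<gamma> \<delta>) prim1 EB ED x p q = gcoef n (- \<eta>) (cf n \<beta> EB x) (cf n \<delta> ED x) (cf n \<alpha> EA x) (\<lambda>q. \<eta> * \<beta> / \<alpha> * cf n \<delta> ED x q + - (\<eta> * \<delta> / \<alpha>) * cf n \<beta> EB x q) p q"
  "tab (t1 n \<eta> \<alpha> \<beta> \<gamma> \<delta>) prim1 EC ED x p q = gcoef n \<eta> (cf n \<gamma> EC x) (cf n \<delta> ED x) (cf n \<alpha> EA x) (\<lambda>q. - (\<eta> * \<gamma> / \<alpha>) * cf n \<delta> ED x q + \<eta> * \<delta> / \<alpha> * cf n \<gamma> EC x q) p q"
  "tab (t1 n \<eta> \<alpha> \<beta> \<gamma> \<delta>) prim1 EA ED x p q = gcoef n \<eta> (cf n \<gamma> EC x) (cf n \<beta> EB x) (cf n \<alpha> EA x) (\<lambda>q. - (\<eta> * \<gamma> / \<alpha>) * cf n \<beta> EB x q + \<eta> * \<beta> / \<alpha> * cf n \<gamma> EC x q) p q"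
  "tab (t1 n \<eta> \<alpha> \<beta> \<gamma> \<delta>) prim1 ED ED x p q =
     \<eta> * \<gamma> / \<alpha> * (cf n \<delta> ED x p * cf n \<beta> EB x q - cf n \<delta> ED x q * cf n \<beta> EB x p)
               - \<eta> * \<beta> / \<alpha> * (cf n \<delta> ED x p * cf n \<gamma> EC x q - cf n \<delta> ED x q * cf n \<gamma> EC x p)
               + \<eta> * \<delta> / \<alpha> * (cf n \<beta> EB x p * cf n \<gamma> EC x q - cf n \<beta> EB x q * cf n \<gamma> EC x p)"
  by (simp_all add: tab_def prim1_def t1_def)

lemma Q1_br: assumes n1: "1 \<le> n" and al: "\<alpha> \<noteq> 0"
  shows "bracket1 n \<eta> \<alpha> \<beta> \<gamma> \<delta> (Q1 n \<eta> \<alpha> \<beta> \<gamma> \<delta>)"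
  unfolding bracket1_def Let_def
proof (intro conjI allI impI)
  show "skew_on n (Q1 n \<eta> \<alpha> \<beta> \<gamma> \<delta>)" by (rule Qof_skew) (rule tab1_skew)
next
  fix x :: pt and l m :: complex assume lm: "l \<noteq> m"
  have lm': "l - m \<noteq> 0" using lm by simp
  note G = genbr_Qof tab1_eval
  let ?A = "entry n \<alpha> EA x" and ?B = "entry n \<beta> EB x" and ?C = "entry n \<gamma> EC x" and ?D = "entry n \<delta> ED x"
  show "genbr n (Q1 n \<eta> \<alpha> \<beta> \<gamma> \<delta>) EA EA x l m = 0" by (simp add: G)
  show "genbr n (Q1 n \<eta> \<alpha> \<beta> \<gamma> \<delta>) EB EB x l m = 0" by (simp add: G)
  show "genbr n (Q1 n \<eta> \<alpha> \<beta> \<gamma> \<delta>) EC EC x l m = 0" by (simp add: G)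
  show "genbr n (Q1 n \<eta> \<alpha> \<beta> \<gamma> \<delta>) EB EA x l m = \<eta> / (l - m) * (l * ?B l * ?A m - m * ?B m * ?A l) - \<eta> * \<beta> / \<alpha> * ?A l * ?A m"
  proof -
    have "genbr n (Q1 n \<eta> \<alpha> \<beta> \<gamma> \<delta>) EB EA x l m = \<eta> * l / (l - m) * (?B l * ?A m - ?B m * ?A l) + ?A l * (\<eta> * ?B m + - (\<eta> * \<beta> / \<alpha>) * ?A m)"
      unfolding G by (rule GENspec[OF lm n1]) (use al in \<open>simp_all add: field_simps\<close>)
    also have "\<dots> = \<eta> / (l - m) * (l * ?B l * ?A m - m * ?B m * ?A l) - \<eta> * \<beta> / \<alpha> * ?A l * ?A m"
      using lm' al by (simp add: field_simps; (simp add: algebra_simps)?)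
    finally show ?thesis .
  qed
  show "genbr n (Q1 n \<eta> \<alpha> \<beta> \<gamma> \<delta>) EC EA x l m = - \<eta> / (l - m) * (l * ?C l * ?A m - m * ?C m * ?A l) + \<eta> * \<gamma> / \<alpha> * ?A l * ?A m"
  proof -
    have "genbr n (Q1 n \<eta> \<alpha> \<beta> \<gamma> \<delta>) EC EA x l m = - \<eta> * l / (l - m) * (?C l * ?A m - ?C m * ?A l) + ?A l * (- \<eta> * ?C m + \<eta> * \<gamma> / \<alpha> * ?A m)"
      unfolding G by (rule GENspec[OF lm n1]) (use al in \<open>simp_all add: field_simps\<close>)
    also have "\<dots> = - \<eta> / (l - m) * (l * ?C l * ?A m - m * ?C m * ?A l) + \<eta> * \<gamma> / \<alpha> * ?A l * ?A m"
      using lm' al by (simp add: field_simps; (simp add: algebra_simps)?)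
    finally show ?thesis .
  qed
  show "genbr n (Q1 n \<eta> \<alpha> \<beta> \<gamma> \<delta>) EB EC x l m = \<eta> / (l - m) * (l * ?D l * ?A m - m * ?D m * ?A l) - \<eta> * \<delta> / \<alpha> * ?A l * ?A m"
  proof -
    have "genbr n (Q1 n \<eta> \<alpha> \<beta> \<gamma> \<delta>) EB EC x l m = \<eta> * l / (l - m) * (?D l * ?A m - ?D m * ?A l) + ?A l * (\<eta> * ?D m + - (\<eta> * \<delta> / \<alpha>) * ?A m)"
      unfolding G by (rule GENspec[OF lm n1]) (use al in \<open>simp_all add: field_simps\<close>)
    also have "\<dots> = \<eta> / (l - m) * (l * ?D l * ?A m - m * ?D m * ?A l) - \<eta> * \<delta> / \<alpha> * ?A l * ?A m"
      using lm' al by (simp add: field_simps; (simp add: algebra_simps)?)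
    finally show ?thesis .
  qed
  show "genbr n (Q1 n \<eta> \<alpha> \<beta> \<gamma> \<delta>) EB ED x l m = - \<eta> * l / (l - m) * (?B l * ?D m - ?B m * ?D l) + \<eta> * ?A l * (\<beta> / \<alpha> * ?D m - \<delta> / \<alpha> * ?B m)"
  proof -
    have "genbr n (Q1 n \<eta> \<alpha> \<beta> \<gamma> \<delta>) EB ED x l m = - \<eta> * l / (l - m) * (?B l * ?D m - ?B m * ?D l) + ?A l * (\<eta> * \<beta> / \<alpha> * ?D m + - (\<eta> * \<delta> / \<alpha>) * ?B m)"
      unfolding G by (rule GENspec[OF lm n1]) (use al in \<open>simp_all add: field_simps\<close>)
    also have "\<dots> = - \<eta> * l / (l - m) * (?B l * ?D m - ?B m * ?D l) + \<eta> * ?A l * (\<beta> / \<alpha> * ?D m - \<delta> / \<alpha> * ?B m)"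
      using lm' al by (simp add: field_simps; (simp add: algebra_simps)?)
    finally show ?thesis .
  qed
  show "genbr n (Q1 n \<eta> \<alpha> \<beta> \<gamma> \<delta>) EC ED x l m = \<eta> * l / (l - m) * (?C l * ?D m - ?C m * ?D l) - \<eta> * ?A l * (\<gamma> / \<alpha> * ?D m - \<delta> / \<alpha> * ?C m)"
  proof -
    have "genbr n (Q1 n \<eta> \<alpha> \<beta> \<gamma> \<delta>) EC ED x l m = \<eta> * l / (l - m) * (?C l * ?D m - ?C m * ?D l) + ?A l * (- (\<eta> * \<gamma> / \<alpha>) * ?D m + \<eta> * \<delta> / \<alpha> * ?C m)"
      unfolding G by (rule GENspec[OF lm n1]) (use al in \<open>simp_all add: field_simps\<close>)
    also have "\<dots> = \<eta> * l / (l - m) * (?C l * ?D m - ?C m * ?D l) - \<eta> * ?A l * (\<gamma> / \<alpha> * ?D m - \<delta> / \<alpha> * ?C m)"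
      using lm' al by (simp add: field_simps; (simp add: algebra_simps)?)
    finally show ?thesis .
  qed
  show "genbr n (Q1 n \<eta> \<alpha> \<beta> \<gamma> \<delta>) EA ED x l m = \<eta> * l / (l - m) * (?C l * ?B m - ?C m * ?B l) - \<eta> * ?A l * (\<gamma> / \<alpha> * ?B m - \<beta> / \<alpha> * ?C m)"
  proof -
    have "genbr n (Q1 n \<eta> \<alpha> \<beta> \<gamma> \<delta>) EA ED x l m = \<eta> * l / (l - m) * (?C l * ?B m - ?C m * ?B l) + ?A l * (- (\<eta> * \<gamma> / \<alpha>) * ?B m + \<eta> * \<beta> / \<alpha> * ?C m)"
      unfolding G by (rule GENspec[OF lm n1]) (use al in \<open>simp_all add: field_simps\<close>)
    also have "\<dots> = \<eta> * l / (l - m) * (?C l * ?B m - ?C m * ?B l) - \<eta> * ?A l * (\<gamma> / \<alpha> * ?B m - \<beta> / \<alpha> * ?C m)"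
      using lm' al by (simp add: field_simps; (simp add: algebra_simps)?)
    finally show ?thesis .
  qed
  show "genbr n (Q1 n \<eta> \<alpha> \<beta> \<gamma> \<delta>) ED ED x l m = \<eta> * \<gamma> / \<alpha> * (?D l * ?B m - ?D m * ?B l)
                          - \<eta> * \<beta> / \<alpha> * (?D l * ?C m - ?D m * ?C l)
                          + \<eta> * \<delta> / \<alpha> * (?B l * ?C m - ?B m * ?C l)"
  proof -
    let ?d = "cf n \<delta> ED x" and ?b = "cf n \<beta> EB x" and ?c = "cf n \<gamma> EC x"
    define c where "c p q = \<eta> * \<gamma> / \<alpha> * (?d p * ?b q - ?d q * ?b p)
               - \<eta> * \<beta> / \<alpha> * (?d p * ?c q - ?d q * ?c p)
               + \<eta> * \<delta> / \<alpha> * (?b p * ?c q - ?b q * ?c p)" for p q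
    have "genbr n (Q1 n \<eta> \<alpha> \<beta> \<gamma> \<delta>) ED ED x l m = (\<Sum>p<n. \<Sum>q<n. c p q * l ^ p * m ^ q)"
      unfolding G c_def by simp
    also have "\<dots> = (\<Sum>p\<le>n. \<Sum>q\<le>n. c p q * l ^ p * m ^ q)"
    proof (rule RED)
      fix p q assume "p \<le> n" "q \<le> n" "p = n \<or> q = n"
      then show "c p q = 0" unfolding c_def by (auto simp: algebra_simps)
    qed
    also have "\<dots> = \<eta> * \<gamma> / \<alpha> * (\<Sum>p\<le>n. \<Sum>q\<le>n. (?d p * ?b q - ?d q * ?b p) * l ^ p * m ^ q)
               - \<eta> * \<beta> / \<alpha> * (\<Sum>p\<le>n. \<Sum>q\<le>n. (?d p * ?c q - ?d q * ?c p) * l ^ p * m ^ q)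
               + \<eta> * \<delta> / \<alpha> * (\<Sum>p\<le>n. \<Sum>q\<le>n. (?b p * ?c q - ?b q * ?c p) * l ^ p * m ^ q)"
      unfolding c_def by (simp add: sum.distrib sum_subtractf sum_distrib_left algebra_simps)
    also have "\<dots> = \<eta> * \<gamma> / \<alpha> * (?D l * ?B m - ?D m * ?B l)
                          - \<eta> * \<beta> / \<alpha> * (?D l * ?C m - ?D m * ?C l)
                          + \<eta> * \<delta> / \<alpha> * (?B l * ?C m - ?B m * ?C l)"
      unfolding entry_sum PROD2 ..
    finally show ?thesis .
  qed
qed

theorem proposition1:
  fixes n :: nat and \<eta> \<alpha> \<beta> \<gamma> \<delta> :: complex
  assumes "n \<ge> 1" and "\<alpha> \<noteq> 0"
  shows "(\<exists>P0. sklyanin0 n \<eta> \<alpha> \<beta> \<gamma> \<delta> P0) \<and> (\<exists>P1. bracket1 n \<eta> \<alpha> \<beta> \<gamma> \<delta> P1) \<and>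
         (\<forall>P0 P1. sklyanin0 n \<eta> \<alpha> \<beta> \<gamma> \<delta> P0 \<longrightarrow> bracket1 n \<eta> \<alpha> \<beta> \<gamma> \<delta> P1 \<longrightarrow>
            (\<forall>a b :: complex. is_poisson n (\<lambda>v w x. a * P0 v w x + b * P1 v w x)))"
proof (intro conjI allI impI)
  show "\<exists>P0. sklyanin0 n \<eta> \<alpha> \<beta> \<gamma> \<delta> P0" using Q0_sk by blast
  show "\<exists>P1. bracket1 n \<eta> \<alpha> \<beta> \<gamma> \<delta> P1" using Q1_br[OF assms] by blast
next
  fix P0 P1 a b
  assume s0: "sklyanin0 n \<eta> \<alpha> \<beta> \<gamma> \<delta> P0" and s1: "bracket1 n \<eta> \<alpha> \<beta> \<gamma> \<delta> P1"
  have g0: "GSp n \<alpha> \<beta> \<gamma> \<delta> P0 \<eta> 0 0 0 0" by (rule spec0[OF s0])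
  have g1: "GSp n \<alpha> \<beta> \<gamma> \<delta> P1 0 \<eta> (\<beta> / \<alpha>) (\<gamma> / \<alpha>) (\<delta> / \<alpha>)" by (rule spec1[OF s1 assms(2)])
  have gq0: "GSp n \<alpha> \<beta> \<gamma> \<delta> (Q0 n \<eta> \<alpha> \<beta> \<gamma> \<delta>) \<eta> 0 0 0 0" by (rule spec0[OF Q0_sk])
  have gq1: "GSp n \<alpha> \<beta> \<gamma> \<delta> (Q1 n \<eta> \<alpha> \<beta> \<gamma> \<delta>) 0 \<eta> (\<beta> / \<alpha>) (\<gamma> / \<alpha>) (\<delta> / \<alpha>)"
    by (rule spec1[OF Q1_br[OF assms] assms(2)])
  have pf0: "P0 v w \<in> polyfun n" if "v \<in> coords n" "w \<in> coords n" for v w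
    using GSp_unique[OF g0 gq0 that] Qof_pf[OF t0_pf] by simp
  have pf1: "P1 v w \<in> polyfun n" if "v \<in> coords n" "w \<in> coords n" for v w
    using GSp_unique[OF g1 gq1 that] Qof_pf[OF t1_pf] by simp
  have sk0: "skew_on n P0" using s0 unfolding sklyanin0_def by blast
  have sk1: "skew_on n P1" using s1 unfolding bracket1_def by blast
  interpret gsctx n \<alpha> \<beta> \<gamma> \<delta> "\<lambda>v w x. a * P0 v w x + b * P1 v w x" "a * \<eta>" "b * \<eta>" "\<beta> / \<alpha>" "\<gamma> / \<alpha>" "\<delta> / \<alpha>"
  proof
    fix v w assume "v \<in> coords n" "w \<in> coords n"
    then show "(\<lambda>x. a * P0 v w x + b * P1 v w x) \<in> polyfun n"
      using pf0 pf1 by (intro polyfun.pf_add pf_scal) auto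
  next
    show "skew_on n (\<lambda>v w x. a * P0 v w x + b * P1 v w x)"
      unfolding skew_on_def
    proof (intro ballI allI)
      fix v w x assume vw: "v \<in> coords n" "w \<in> coords n"
      have e0: "P0 w v x = - P0 v w x" using sk0 vw unfolding skew_on_def by blast
      have e1: "P1 w v x = - P1 v w x" using sk1 vw unfolding skew_on_def by blast
      show "a * P0 w v x + b * P1 w v x = - (a * P0 v w x + b * P1 v w x)"
        unfolding e0 e1 by (simp add: algebra_simps)
    qed
  next
    show "GSp n \<alpha> \<beta> \<gamma> \<delta> (\<lambda>v w x. a * P0 v w x + b * P1 v w x) (a * \<eta>) (b * \<eta>) (\<beta> / \<alpha>) (\<gamma> / \<alpha>) (\<delta> / \<alpha>)"
      by (rule GSp_comb[OF g0 g1])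
  qed
  show "is_poisson n (\<lambda>v w x. a * P0 v w x + b * P1 v w x)" by (rule poisson_gs)
qed

end
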